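(* Let $(\Omega,P,\pi)$ be a finite irreducible reversible Markov chain (in continuous time), let $A\subset\Omega$ be nonempty, put $\epsilon:=\pi(A)$, and let $t\ge1$. Set $r:=(t+|\log\epsilon|)t_{\mathrm{rel}}$, $\ell:=t_{\mathrm{rel}}\log2$ and $s:=2\epsilon^{-1}t_{\mathrm{rel}}\log2$. Then there exists $J\subset\Omega$ such that: (i) $\pi(J)\ge1-\frac34e^{-2t}$; (ii) $\mathbb E_z[T_A]\le r+\frac{11}{2}(s+\ell)$ for every $z\in J$; (iii) $\mathrm P_z[T_A\le r+i(\ell+s)]\ge(1-2^{-i})^2$ for every $z\in J$ and every integer $i\ge1$.
   Context: Continuous-time chain with heat kernel $H_t(x,y)=\sum_{k\ge0}e^{-t}\frac{t^k}{k!}P^k(x,y)$; reversible means $\pi(x)P(x,y)=\pi(y)P(y,x)$. $\mathrm P_z,\mathbb E_z$: probability/expectation for the chain started at $z$. $T_A:=\inf\{t\ge0:X_t\in A\}$. $t_{\mathrm{rel}}:=(1-\lambda_2)^{-1}$, $\lambda_2$ the second largest eigenvalue of $P$. *)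

theory Defs
  imports "HOL-Analysis.Analysis"
begin

definition stochastic :: "('a::finite \<Rightarrow> 'a \<Rightarrow> real) \<Rightarrow> bool" where
  "stochastic P \<longleftrightarrow> (\<forall>x y. P x y \<ge> 0) \<and> (\<forall>x. (\<Sum>y\<in>UNIV. P x y) = 1)"

fun mpow :: "('a::finite \<Rightarrow> 'a \<Rightarrow> real) \<Rightarrow> nat \<Rightarrow> 'a \<Rightarrow> 'a \<Rightarrow> real" where
  "mpow P 0 x y = (if x = y then 1 else 0)"
| "mpow P (Suc n) x y = (\<Sum>z\<in>UNIV. P x z * mpow P n z y)"

definition irreducible_chain :: "('a::finite \<Rightarrow> 'a \<Rightarrow> real) \<Rightarrow> bool" where
  "irreducible_chain P \<longleftrightarrow> (\<forall>x y. \<exists>n. mpow P n x y > 0)"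

definition reversible :: "('a::finite \<Rightarrow> 'a \<Rightarrow> real) \<Rightarrow> ('a \<Rightarrow> real) \<Rightarrow> bool" where
  "reversible P \<pi> \<longleftrightarrow> (\<forall>x y. \<pi> x * P x y = \<pi> y * P y x)"

definition eigenvalue :: "('a::finite \<Rightarrow> 'a \<Rightarrow> real) \<Rightarrow> real \<Rightarrow> bool" where
  "eigenvalue P mu \<longleftrightarrow> (\<exists>v::'a \<Rightarrow> real. v \<noteq> (\<lambda>_. 0) \<and> (\<forall>x. (\<Sum>y\<in>UNIV. P x y * v y) = mu * v x))"

text \<open>Second largest eigenvalue (for an irreducible chain the eigenvalue 1 is simple,
  so this is the largest eigenvalue different from 1) and relaxation time.\<close>
definition lambda2 :: "('a::finite \<Rightarrow> 'a \<Rightarrow> real) \<Rightarrow> real" where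
  "lambda2 P = Max {mu. eigenvalue P mu \<and> mu \<noteq> 1}"

definition t_rel :: "('a::finite \<Rightarrow> 'a \<Rightarrow> real) \<Rightarrow> real" where
  "t_rel P = 1 / (1 - lambda2 P)"

text \<open>Discrete-time hitting probability: probability, started at z, that the
  jump chain visits A within its first k steps (steps 0..k).\<close>
fun hit_prob :: "('a::finite \<Rightarrow> 'a \<Rightarrow> real) \<Rightarrow> 'a set \<Rightarrow> nat \<Rightarrow> 'a \<Rightarrow> real" where
  "hit_prob P A 0 z = (if z \<in> A then 1 else 0)"
| "hit_prob P A (Suc k) z = (if z \<in> A then 1 else (\<Sum>y\<in>UNIV. P z y * hit_prob P A k y))"

text \<open>Continuous-time chain (rate-1 Poissonisation, as in the heat kernel
  H_t = sum_k e^{-t} t^k/k! P^k): P_z[T_A <= t].\<close>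
definition cont_hit_prob :: "('a::finite \<Rightarrow> 'a \<Rightarrow> real) \<Rightarrow> 'a set \<Rightarrow> 'a \<Rightarrow> real \<Rightarrow> real" where
  "cont_hit_prob P A z t =
     (if t < 0 then 0 else (\<Sum>k. exp (- t) * t ^ k / fact k * hit_prob P A k z))"

text \<open>E_z[T_A] = integral over [0,oo) of P_z[T_A > t] dt (tail formula).\<close>
definition exp_hit_time :: "('a::finite \<Rightarrow> 'a \<Rightarrow> real) \<Rightarrow> 'a set \<Rightarrow> 'a \<Rightarrow> ennreal" where
  "exp_hit_time P A z = (\<integral>\<^sup>+ t. indicator {0..} t * ennreal (1 - cont_hit_prob P A z t) \<partial>lborel)"

end

theory Submission
  imports Defs
begin

definition pw :: "real \<Rightarrow> nat \<Rightarrow> real" where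
  "pw u k = exp (- u) * u ^ k / fact k"

lemma pw_nonneg: "u \<ge> 0 \<Longrightarrow> pw u k \<ge> 0"
  by (simp add: pw_def)

lemma pw_sums: "(\<lambda>k. pw u k) sums 1"
proof -
  have "(\<lambda>n. u ^ n /\<^sub>R fact n) sums exp u" by (rule exp_converges)
  then have "(\<lambda>n. exp (-u) * (u ^ n /\<^sub>R fact n)) sums (exp (-u) * exp u)"
    by (rule sums_mult)
  then show ?thesis by (simp add: pw_def exp_minus field_simps)
qed

lemma pw_summable: "summable (\<lambda>k. pw u k)"
  using pw_sums sums_summable by blast

lemma pw_suminf: "(\<Sum>k. pw u k) = 1"
  using pw_sums sums_unique by fastforce

lemma pw_summable_bdd:
  assumes "u \<ge> 0" and "\<And>k. \<bar>a k\<bar> \<le> B"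
  shows "summable (\<lambda>k. norm (pw u k * a k))"
proof (rule summable_comparison_test[of _ "\<lambda>k. pw u k * B"])
  show "\<exists>N. \<forall>n\<ge>N. norm (norm (pw u n * a n)) \<le> pw u n * B"
    using assms pw_nonneg[OF assms(1)] by (auto simp: abs_mult intro!: mult_left_mono)
  show "summable (\<lambda>k. pw u k * B)" using pw_summable summable_mult2 by blast
qed

lemma pw_summable_bdd':
  assumes "u \<ge> 0" and "\<And>k. \<bar>a k\<bar> \<le> B"
  shows "summable (\<lambda>k. pw u k * a k)"
  using pw_summable_bdd[OF assms] by (rule summable_norm_cancel)

lemma pw_suminf_bdd:
  assumes u: "u \<ge> 0" and ab: "\<And>k. \<bar>a k\<bar> \<le> B"
  shows "\<bar>\<Sum>k. pw u k * a k\<bar> \<le> B"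
proof -
  have s1: "summable (\<lambda>k. norm (pw u k * a k))" by (rule pw_summable_bdd[OF u ab])
  have s2: "summable (\<lambda>k. pw u k * B)" by (rule summable_mult2[OF pw_summable])
  have le: "norm (pw u k * a k) \<le> pw u k * B" for k
    using ab[of k] pw_nonneg[OF u, of k] by (simp add: abs_mult mult_left_mono)
  have "\<bar>\<Sum>k. pw u k * a k\<bar> \<le> (\<Sum>k. norm (pw u k * a k))"
    using summable_norm[OF s1] by simp
  also have "\<dots> \<le> (\<Sum>k. pw u k * B)"
    by (rule suminf_le[OF le s1 s2])
  also have "\<dots> = (\<Sum>k. pw u k) * B" by (rule suminf_mult2[symmetric, OF pw_summable])
  also have "\<dots> = B" using pw_suminf by simp
  finally show ?thesis .
qed

lemma pw_conv_term:
  assumes kn: "k \<le> n"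
  shows "exp (-(a+b)) * (of_nat (n choose k) * a ^ k * b ^ (n - k)) / fact n = pw a k * pw b (n - k)"
proof -
  have C: "real (n choose k) = fact n / (fact k * fact (n - k))"
      using binomial_fact[OF kn] by simp
  have E: "exp (-(a+b)) = exp (-a) * exp (-b)" by (simp add: exp_add[symmetric])
  have F: "(fact n :: real) \<noteq> 0" by simp
  show ?thesis unfolding C E pw_def using F by (simp add: divide_simps)
qed

lemma pw_conv:
  shows "pw (a + b) n = (\<Sum>j\<le>n. pw a j * pw b (n - j))"
proof -
  have "(a + b) ^ n = (\<Sum>k\<le>n. of_nat (n choose k) * a ^ k * b ^ (n - k))"
    by (simp add: binomial_ring)
  then have "pw (a + b) n = (\<Sum>k\<le>n. exp (-(a+b)) * (of_nat (n choose k) * a ^ k * b ^ (n - k)) / fact n)"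
    by (simp add: pw_def sum_distrib_left sum_divide_distrib)
  also have "\<dots> = (\<Sum>j\<le>n. pw a j * pw b (n - j))"
    by (rule sum.cong) (simp_all only: atMost_iff pw_conv_term)
  finally show ?thesis .
qed

lemma pw_lazy:
  assumes "j \<le> k"
  shows "pw (2 * u) k * (of_nat (k choose j) / 2 ^ k) = pw u j * pw u (k - j)"
proof -
  have C: "real (k choose j) = fact k / (fact j * fact (k - j))"
    using binomial_fact[OF assms] by simp
  have U: "(2*u) ^ k = 2^k * (u ^ j * u ^ (k - j))"
    using assms by (simp add: power_add[symmetric] power_mult_distrib)
  have E: "exp (-(2*u)) = exp (-u) * exp (-u)" by (simp add: exp_add[symmetric])
  show ?thesis unfolding C E pw_def U by (simp add: divide_simps)
qed

lemma poisson_split_le: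
  fixes x :: "nat \<Rightarrow> real" and c d :: "'b \<Rightarrow> nat \<Rightarrow> real"
  assumes a: "a \<ge> 0" and b: "b \<ge> 0" and Y: "finite Y"
    and bx: "\<And>n. \<bar>x n\<bar> \<le> B"
    and bc: "\<And>y j. \<bar>c y j\<bar> \<le> C"
    and bd: "\<And>y m. \<bar>d y m\<bar> \<le> D"
    and le: "\<And>j m. x (j + m) \<le> (\<Sum>y\<in>Y. c y j * d y m)"
  shows "(\<Sum>n. pw (a + b) n * x n) \<le> (\<Sum>y\<in>Y. (\<Sum>j. pw a j * c y j) * (\<Sum>m. pw b m * d y m))"
proof -
  have sa: "summable (\<lambda>j. norm (pw a j * c y j))" for y by (rule pw_summable_bdd[OF a bc])
  have sb: "summable (\<lambda>m. norm (pw b m * d y m))" for y by (rule pw_summable_bdd[OF b bd])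
  have cp: "(\<Sum>j. pw a j * c y j) * (\<Sum>m. pw b m * d y m) =
      (\<Sum>n. \<Sum>j\<le>n. (pw a j * c y j) * (pw b (n - j) * d y (n - j)))" for y
    by (rule Cauchy_product[OF sa sb])
  have scp: "summable (\<lambda>n. \<Sum>j\<le>n. (pw a j * c y j) * (pw b (n - j) * d y (n - j)))" for y
    by (rule summable_Cauchy_product[OF sa sb])
  have sw: "(\<Sum>y\<in>Y. \<Sum>j\<le>n. (pw a j * c y j) * (pw b (n - j) * d y (n - j))) =
      (\<Sum>j\<le>n. pw a j * pw b (n - j) * (\<Sum>y\<in>Y. c y j * d y (n - j)))" for n
    by (subst sum.swap) (simp add: sum_distrib_left mult_ac)
  have "(\<Sum>y\<in>Y. (\<Sum>j. pw a j * c y j) * (\<Sum>m. pw b m * d y m)) =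
        (\<Sum>y\<in>Y. \<Sum>n. \<Sum>j\<le>n. (pw a j * c y j) * (pw b (n - j) * d y (n - j)))"
    using cp by simp
  also have "\<dots> = (\<Sum>n. \<Sum>y\<in>Y. \<Sum>j\<le>n. (pw a j * c y j) * (pw b (n - j) * d y (n - j)))"
    by (rule suminf_sum[symmetric]) (use scp in auto)
  also have "\<dots> = (\<Sum>n. \<Sum>j\<le>n. pw a j * pw b (n - j) * (\<Sum>y\<in>Y. c y j * d y (n - j)))"
    using sw by simp
  finally have R: "(\<Sum>y\<in>Y. (\<Sum>j. pw a j * c y j) * (\<Sum>m. pw b m * d y m)) =
       (\<Sum>n. \<Sum>j\<le>n. pw a j * pw b (n - j) * (\<Sum>y\<in>Y. c y j * d y (n - j)))" .
  have sR: "summable (\<lambda>n. \<Sum>j\<le>n. pw a j * pw b (n - j) * (\<Sum>y\<in>Y. c y j * d y (n - j)))"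
  proof -
    have "summable (\<lambda>n. \<Sum>y\<in>Y. \<Sum>j\<le>n. (pw a j * c y j) * (pw b (n - j) * d y (n - j)))"
      by (rule summable_sum) (use scp in auto)
    then show ?thesis using sw by simp
  qed
  have L: "(\<Sum>n. pw (a + b) n * x n) = (\<Sum>n. \<Sum>j\<le>n. pw a j * pw b (n - j) * x n)"
    by (simp add: pw_conv sum_distrib_right)
  have sL: "summable (\<lambda>n. \<Sum>j\<le>n. pw a j * pw b (n - j) * x n)"
    using pw_summable_bdd'[of "a+b" x B] a b bx by (simp add: pw_conv sum_distrib_right)
  have "(\<Sum>n. \<Sum>j\<le>n. pw a j * pw b (n - j) * x n)
      \<le> (\<Sum>n. \<Sum>j\<le>n. pw a j * pw b (n - j) * (\<Sum>y\<in>Y. c y j * d y (n - j)))"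
  proof (rule suminf_le[OF _ sL sR])
    fix n show "(\<Sum>j\<le>n. pw a j * pw b (n - j) * x n)
      \<le> (\<Sum>j\<le>n. pw a j * pw b (n - j) * (\<Sum>y\<in>Y. c y j * d y (n - j)))"
    proof (rule sum_mono)
      fix j assume "j \<in> {..n}"
      then have "x n = x (j + (n - j))" by simp
      also have "\<dots> \<le> (\<Sum>y\<in>Y. c y j * d y (n - j))" by (rule le)
      finally show "pw a j * pw b (n - j) * x n \<le> pw a j * pw b (n - j) * (\<Sum>y\<in>Y. c y j * d y (n - j))"
        using pw_nonneg[OF a] pw_nonneg[OF b] by (simp add: mult_left_mono)
    qed
  qed
  then show ?thesis using L R by simp
qed

lemma poisson_lazy:
  assumes u: "u \<ge> 0" and ba: "\<And>k. \<bar>a k\<bar> \<le> B"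
  shows "(\<Sum>k. pw u k * a k) = (\<Sum>k. pw (2 * u) k * (\<Sum>j\<le>k. of_nat (k choose j) / 2 ^ k * a j))"
proof -
  have sa: "summable (\<lambda>j. norm (pw u j * a j))" by (rule pw_summable_bdd[OF u ba])
  have sb: "summable (\<lambda>m. norm (pw u m * 1))" by (rule pw_summable_bdd[OF u, of _ 1]) simp
  have "(\<Sum>k. pw u k * a k) = (\<Sum>k. pw u k * a k) * (\<Sum>m. pw u m * 1)"
    using pw_suminf by simp
  also have "\<dots> = (\<Sum>n. \<Sum>j\<le>n. (pw u j * a j) * (pw u (n - j) * 1))"
    by (rule Cauchy_product[OF sa sb])
  also have "\<dots> = (\<Sum>k. pw (2 * u) k * (\<Sum>j\<le>k. of_nat (k choose j) / 2 ^ k * a j))"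
  proof -
    have "(\<Sum>j\<le>n. (pw u j * a j) * (pw u (n - j) * 1)) =
          pw (2 * u) n * (\<Sum>j\<le>n. of_nat (n choose j) / 2 ^ n * a j)" for n
      unfolding sum_distrib_left
    proof (rule sum.cong)
      fix j assume "j \<in> {..n}"
      then have jn: "j \<le> n" by simp
      have "pw u j * a j * (pw u (n - j) * 1) = (pw u j * pw u (n - j)) * a j" by simp
      also have "\<dots> = pw (2 * u) n * (real (n choose j) / 2 ^ n) * a j"
        using pw_lazy[OF jn, of u] by simp
      finally show "pw u j * a j * (pw u (n - j) * 1) = pw (2 * u) n * (real (n choose j) / 2 ^ n * a j)"
        by (simp only: mult.assoc)
    qed simp
    then show ?thesis by simp
  qed
  finally show ?thesis .
qed

definition app :: "('a::finite \<Rightarrow> 'a \<Rightarrow> real) \<Rightarrow> ('a \<Rightarrow> real) \<Rightarrow> 'a \<Rightarrow> real" where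
  "app T f x = (\<Sum>y\<in>UNIV. T x y * f y)"

definition ip :: "('a::finite \<Rightarrow> real) \<Rightarrow> ('a \<Rightarrow> real) \<Rightarrow> ('a \<Rightarrow> real) \<Rightarrow> real" where
  "ip \<pi> f g = (\<Sum>x\<in>UNIV. \<pi> x * f x * g x)"

definition emb :: "('a::finite \<Rightarrow> real) \<Rightarrow> ('a \<Rightarrow> real) \<Rightarrow> real ^ 'a" where
  "emb \<pi> f = (\<chi> x. sqrt (\<pi> x) * f x)"

definition nrm :: "('a::finite \<Rightarrow> real) \<Rightarrow> ('a \<Rightarrow> real) \<Rightarrow> real" where
  "nrm \<pi> f = norm (emb \<pi> f)"

definition lazy :: "('a::finite \<Rightarrow> 'a \<Rightarrow> real) \<Rightarrow> 'a \<Rightarrow> 'a \<Rightarrow> real" where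
  "lazy T x y = ((if x = y then 1 else 0) + T x y) / 2"

definition substoch :: "('a::finite \<Rightarrow> 'a \<Rightarrow> real) \<Rightarrow> bool" where
  "substoch T \<longleftrightarrow> (\<forall>x y. T x y \<ge> 0) \<and> (\<forall>x. (\<Sum>y\<in>UNIV. T x y) \<le> 1)"

definition heat :: "('a::finite \<Rightarrow> 'a \<Rightarrow> real) \<Rightarrow> real \<Rightarrow> ('a \<Rightarrow> real) \<Rightarrow> 'a \<Rightarrow> real" where
  "heat T u f x = (\<Sum>k. pw u k * (app T ^^ k) f x)"

definition selfadj :: "('a::finite \<Rightarrow> real) \<Rightarrow> ('a \<Rightarrow> 'a \<Rightarrow> real) \<Rightarrow> bool" where
  "selfadj \<pi> T \<longleftrightarrow> (\<forall>x y. \<pi> x * T x y = \<pi> y * T y x)"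

lemma app_add: "app T (\<lambda>x. f x + g x) = (\<lambda>x. app T f x + app T g x)"
  by (auto simp: app_def algebra_simps sum.distrib)

lemma app_scale: "app T (\<lambda>x. c * f x) = (\<lambda>x. c * app T f x)"
  by (auto simp: app_def algebra_simps sum_distrib_left)

lemma app_lin: "app T (\<lambda>x. f x + c * g x) = (\<lambda>x. app T f x + c * app T g x)"
  by (auto simp: app_def algebra_simps sum.distrib sum_distrib_left)

lemma app_diff: "app T (\<lambda>x. f x - g x) = (\<lambda>x. app T f x - app T g x)"
  by (auto simp: app_def algebra_simps sum_subtractf)

lemma app_sum: "app T (\<lambda>x. \<Sum>j\<in>J. f j x) = (\<lambda>x. \<Sum>j\<in>J. app T (f j) x)"
  by (auto simp: app_def sum_distrib_left intro!: sum.swap)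

lemma app_lazy: "app (lazy T) f x = (f x + app T f x) / 2"
proof -
  have d: "(\<Sum>y\<in>UNIV. (if x = y then 1 else 0) * f y) = f x"
  proof -
    have "(\<Sum>y\<in>UNIV. (if x = y then 1 else 0) * f y) = (\<Sum>y\<in>UNIV. if x = y then f y else 0)"
      by (rule sum.cong) auto
    then show ?thesis by simp
  qed
  have "app (lazy T) f x = (\<Sum>y\<in>UNIV. (if x = y then 1 else 0) * f y + T x y * f y) / 2"
    by (simp add: app_def lazy_def sum_divide_distrib distrib_right)
  also have "\<dots> = (f x + app T f x) / 2"
    by (simp add: sum.distrib d app_def)
  finally show ?thesis .
qed

lemma ip_sym: "ip \<pi> f g = ip \<pi> g f"
  by (simp add: ip_def mult_ac)

lemma ip_add1: "ip \<pi> (\<lambda>x. f x + c * g x) h = ip \<pi> f h + c * ip \<pi> g h"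
  by (simp add: ip_def algebra_simps sum.distrib sum_distrib_left)

lemma ip_add2: "ip \<pi> h (\<lambda>x. f x + c * g x) = ip \<pi> h f + c * ip \<pi> h g"
  by (simp add: ip_def algebra_simps sum.distrib sum_distrib_left)

lemma selfadj_ip:
  assumes "selfadj \<pi> T"
  shows "ip \<pi> (app T f) g = ip \<pi> f (app T g)"
proof -
  have "ip \<pi> (app T f) g = (\<Sum>x\<in>UNIV. \<Sum>y\<in>UNIV. (\<pi> x * T x y) * f y * g x)"
    by (simp add: ip_def app_def sum_distrib_left sum_distrib_right mult_ac)
  also have "\<dots> = (\<Sum>x\<in>UNIV. \<Sum>y\<in>UNIV. (\<pi> y * T y x) * f y * g x)"
    using assms by (simp add: selfadj_def)
  also have "\<dots> = ip \<pi> f (app T g)"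
    by (subst sum.swap) (simp add: ip_def app_def sum_distrib_left sum_distrib_right mult_ac)
  finally show ?thesis .
qed

lemma emb_nth: "emb \<pi> f $ x = sqrt (\<pi> x) * f x"
  by (simp add: emb_def)

lemma inner_emb:
  assumes "\<forall>x. \<pi> x \<ge> 0"
  shows "inner (emb \<pi> f) (emb \<pi> g) = ip \<pi> f g"
  using assms by (simp add: inner_vec_def emb_nth ip_def mult_ac real_sqrt_mult[symmetric])

lemma nrm_sq:
  assumes "\<forall>x. \<pi> x \<ge> 0"
  shows "(nrm \<pi> f)\<^sup>2 = ip \<pi> f f"
  using inner_emb[OF assms] by (simp add: nrm_def power2_norm_eq_inner)

lemma nrm_nonneg: "nrm \<pi> f \<ge> 0"
  by (simp add: nrm_def)

lemma ip_self_nonneg: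
  assumes "\<forall>x. \<pi> x \<ge> 0"
  shows "ip \<pi> f f \<ge> 0"
  using nrm_sq[OF assms] by (metis zero_le_power2)

lemma ip_cs:
  assumes "\<forall>x. \<pi> x \<ge> 0"
  shows "\<bar>ip \<pi> f g\<bar> \<le> nrm \<pi> f * nrm \<pi> g"
  using Cauchy_Schwarz_ineq2[of "emb \<pi> f" "emb \<pi> g"] inner_emb[OF assms]
  by (simp add: nrm_def)

lemma nrm_eq_sqrt:
  assumes "\<forall>x. \<pi> x \<ge> 0"
  shows "nrm \<pi> f = sqrt (ip \<pi> f f)"
  using nrm_sq[OF assms, of f] nrm_nonneg[of \<pi> f] by (metis real_sqrt_abs abs_of_nonneg)

lemma pointwise_le_nrm:
  assumes "\<forall>x. \<pi> x \<ge> 0"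
  shows "\<pi> z * (f z)\<^sup>2 \<le> (nrm \<pi> f)\<^sup>2"
proof -
  have "\<pi> z * (f z)\<^sup>2 = (\<Sum>x\<in>{z}. \<pi> x * f x * f x)" by (simp add: power2_eq_square mult_ac)
  also have "\<dots> \<le> (\<Sum>x\<in>UNIV. \<pi> x * f x * f x)"
    by (rule sum_mono2) (use assms in \<open>auto simp: mult.assoc intro!: mult_nonneg_nonneg\<close>)
  finally show ?thesis using nrm_sq[OF assms] by (simp add: ip_def)
qed

lemma nrm_series:
  fixes g :: "nat \<Rightarrow> 'a::finite \<Rightarrow> real"
  assumes pos: "\<forall>x. \<pi> x \<ge> 0"
    and sx: "\<And>x. summable (\<lambda>k. c k * g k x)"
    and bd: "\<And>k. \<bar>c k\<bar> * nrm \<pi> (g k) \<le> b k"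
    and sb: "summable b"
  shows "nrm \<pi> (\<lambda>x. \<Sum>k. c k * g k x) \<le> (\<Sum>k. b k)"
proof -
  define V where "V k = c k *\<^sub>R emb \<pi> (g k)" for k
  have nV: "norm (V k) = \<bar>c k\<bar> * nrm \<pi> (g k)" for k
    by (simp add: V_def nrm_def)
  have snV: "summable (\<lambda>k. norm (V k))"
  proof (rule summable_comparison_test[OF _ sb])
    have "norm (norm (V k)) \<le> b k" for k using bd[of k] nV[of k] nrm_nonneg[of \<pi> "g k"] by (simp add: abs_mult)
    then show "\<exists>N. \<forall>n\<ge>N. norm (norm (V n)) \<le> b n" by blast
  qed
  have sV: "summable V" using snV summable_norm_cancel by blast
  have comp: "suminf V $ x = sqrt (\<pi> x) * (\<Sum>k. c k * g k x)" for x
  proof -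
    have "suminf V $ x = (\<Sum>k. V k $ x)"
      using bounded_linear.suminf[OF bounded_linear_vec_nth sV] by simp
    also have "\<dots> = (\<Sum>k. sqrt (\<pi> x) * (c k * g k x))"
      by (simp add: V_def emb_nth mult_ac)
    also have "\<dots> = sqrt (\<pi> x) * (\<Sum>k. c k * g k x)"
      by (rule suminf_mult[OF sx])
    finally show ?thesis .
  qed
  have "emb \<pi> (\<lambda>x. \<Sum>k. c k * g k x) = suminf V"
    by (simp add: vec_eq_iff emb_nth comp)
  then have "nrm \<pi> (\<lambda>x. \<Sum>k. c k * g k x) = norm (suminf V)" by (simp add: nrm_def)
  also have "\<dots> \<le> (\<Sum>k. norm (V k))" by (rule summable_norm[OF snV])
  also have "\<dots> \<le> (\<Sum>k. b k)"
    by (rule suminf_le[OF _ snV sb]) (use bd nV in auto)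
  finally show ?thesis .
qed

lemma substoch_bound:
  assumes "substoch T" and "\<And>x. \<bar>f x\<bar> \<le> B"
  shows "\<bar>app T f x\<bar> \<le> B"
proof -
  have B0: "B \<ge> 0" using assms(2)[of x] by simp
  have "\<bar>app T f x\<bar> \<le> (\<Sum>y\<in>UNIV. \<bar>T x y * f y\<bar>)"
    unfolding app_def by (rule sum_abs)
  also have "\<dots> \<le> (\<Sum>y\<in>UNIV. T x y * B)"
    using assms by (intro sum_mono) (auto simp: substoch_def abs_mult intro!: mult_left_mono)
  also have "\<dots> = (\<Sum>y\<in>UNIV. T x y) * B" by (simp add: sum_distrib_right)
  also have "\<dots> \<le> 1 * B"
    using assms B0 by (intro mult_right_mono) (auto simp: substoch_def)
  finally show ?thesis by simp
qed

lemma substoch_pow_bound: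
  assumes "substoch T" and "\<And>x. \<bar>f x\<bar> \<le> B"
  shows "\<bar>(app T ^^ k) f x\<bar> \<le> B"
proof (induction k arbitrary: x)
  case 0 then show ?case using assms by simp
next
  case (Suc k) then show ?case using substoch_bound[OF assms(1)] by simp
qed

lemma substoch_lazy:
  assumes "substoch T"
  shows "substoch (lazy T)"
proof -
  have "(\<Sum>y\<in>UNIV. lazy T x y) \<le> 1" for x
  proof -
    have "(\<Sum>y\<in>UNIV. lazy T x y) = (\<Sum>y\<in>UNIV. (if x = y then 1 else 0) / 2 + T x y / 2)"
      by (simp add: lazy_def add_divide_distrib)
    also have "\<dots> = 1/2 + (\<Sum>y\<in>UNIV. T x y) / 2"
      by (simp add: sum.distrib sum_divide_distrib[symmetric])
    moreover have "(\<Sum>y\<in>UNIV. T x y) \<le> 1" using assms by (simp add: substoch_def)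
    ultimately show ?thesis by linarith
  qed
  then show ?thesis using assms by (auto simp: substoch_def lazy_def)
qed

lemma finite_bound: "\<exists>B. \<forall>x. \<bar>(f::'a::finite \<Rightarrow> real) x\<bar> \<le> B"
  by (rule exI[of _ "\<Sum>x\<in>UNIV. \<bar>f x\<bar>"]) (auto intro: member_le_sum)

lemma lazy_pow:
  "(app (lazy T) ^^ k) f x = (\<Sum>j\<le>k. of_nat (k choose j) / 2 ^ k * (app T ^^ j) f x)"
proof (induction k arbitrary: x)
  case 0 then show ?case by simp
next
  case (Suc k)
  have IH: "(app (lazy T) ^^ k) f = (\<lambda>x. \<Sum>j\<le>k. of_nat (k choose j) / 2 ^ k * (app T ^^ j) f x)"
    using Suc by auto
  have "(app (lazy T) ^^ Suc k) f x = ((app (lazy T) ^^ k) f x + app T ((app (lazy T) ^^ k) f) x) / 2"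
    by (simp add: app_lazy)
  also have "app T ((app (lazy T) ^^ k) f) x = (\<Sum>j\<le>k. of_nat (k choose j) / 2 ^ k * (app T ^^ Suc j) f x)"
    unfolding IH app_sum app_scale by simp
  finally have "(app (lazy T) ^^ Suc k) f x =
     ((\<Sum>j\<le>k. of_nat (k choose j) / 2 ^ k * (app T ^^ j) f x) +
      (\<Sum>j\<le>k. of_nat (k choose j) / 2 ^ k * (app T ^^ Suc j) f x)) / 2"
    using Suc by simp
  also have "\<dots> = (\<Sum>j\<le>Suc k. of_nat (Suc k choose j) / 2 ^ Suc k * (app T ^^ j) f x)"
  proof -
    define a where "a j = (app T ^^ j) f x" for j
    have "(\<Sum>j\<le>Suc k. of_nat (Suc k choose j) * a j) =
          (\<Sum>j\<le>k. of_nat (k choose j) * a j) + (\<Sum>j\<le>k. of_nat (k choose j) * a (Suc j))"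
    proof -
      have "(\<Sum>j\<le>Suc k. of_nat (Suc k choose j) * a j) =
            a 0 + (\<Sum>j\<le>k. of_nat (Suc k choose Suc j) * a (Suc j))"
        by (subst sum.atMost_Suc_shift) simp
      also have "\<dots> = a 0 + (\<Sum>j\<le>k. of_nat (k choose j) * a (Suc j)) + (\<Sum>j\<le>k. of_nat (k choose Suc j) * a (Suc j))"
        by (simp add: sum.distrib algebra_simps)
      also have "(\<Sum>j\<le>k. of_nat (k choose Suc j) * a (Suc j)) = (\<Sum>j\<le>Suc k. of_nat (k choose j) * a j) - a 0"
        by (subst sum.atMost_Suc_shift) simp
      also have "(\<Sum>j\<le>Suc k. of_nat (k choose j) * a j) = (\<Sum>j\<le>k. of_nat (k choose j) * a j)"
        by simp
      finally show ?thesis by simp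
    qed
    then show ?thesis
      unfolding a_def[symmetric]
      by (simp add: sum_divide_distrib[symmetric] sum_distrib_left[symmetric] field_simps
            flip: sum_divide_distrib)
  qed
  finally show ?case .
qed

lemma discr:
  fixes a b c :: real
  assumes "\<forall>\<tau>. 0 \<le> a + 2 * b * \<tau> + c * \<tau>\<^sup>2" and c0: "c \<ge> 0"
  shows "b\<^sup>2 \<le> a * c"
proof (cases "c = 0")
  case True
  have "b = 0"
  proof (rule ccontr)
    assume b0: "b \<noteq> 0"
    have "0 \<le> a + 2 * b * (- (a + 1) / (2 * b)) + c * (- (a + 1) / (2 * b))\<^sup>2"
      by (rule spec[OF assms(1)])
    then have "0 \<le> a + 2 * b * (- (a + 1) / (2 * b))" using True by simp
    also have "2 * b * (- (a + 1) / (2 * b)) = - (a + 1)" using b0 by simp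
    finally show False by simp
  qed
  then show ?thesis using True by simp
next
  case False
  then have c0: "c > 0" using c0 by simp
  have "0 \<le> a + 2 * b * (- b / c) + c * (- b / c)\<^sup>2" using assms by blast
  also have "\<dots> = a - b\<^sup>2 / c" using c0 by (simp add: field_simps power2_eq_square)
  finally have "b\<^sup>2 / c \<le> a" by simp
  then show ?thesis using c0 by (simp add: field_simps mult.commute)
qed

definition psd :: "('a::finite \<Rightarrow> real) \<Rightarrow> ('a \<Rightarrow> 'a \<Rightarrow> real) \<Rightarrow> bool" where
  "psd \<pi> N \<longleftrightarrow> (\<forall>f. 0 \<le> ip \<pi> (app N f) f)"

lemma psd_cs:
  assumes sa: "selfadj \<pi> N" and ps: "psd \<pi> N"
  shows "(ip \<pi> (app N u) v)\<^sup>2 \<le> ip \<pi> (app N u) u * ip \<pi> (app N v) v"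
proof -
  have sym: "ip \<pi> (app N v) u = ip \<pi> (app N u) v"
    using selfadj_ip[OF sa, of v u] ip_sym by metis
  have "0 \<le> ip \<pi> (app N u) u + 2 * ip \<pi> (app N u) v * \<tau> + ip \<pi> (app N v) v * \<tau>\<^sup>2" for \<tau>
  proof -
    have "0 \<le> ip \<pi> (app N (\<lambda>x. u x + \<tau> * v x)) (\<lambda>x. u x + \<tau> * v x)"
      using ps by (simp add: psd_def)
    also have "\<dots> = ip \<pi> (app N u) u + \<tau> * ip \<pi> (app N u) v + \<tau> * (ip \<pi> (app N v) u + \<tau> * ip \<pi> (app N v) v)"
      unfolding app_lin ip_add1 ip_add2 by simp
    finally show ?thesis unfolding sym by (simp add: power2_eq_square algebra_simps)
  qed
  moreover have "0 \<le> ip \<pi> (app N v) v" using ps by (simp add: psd_def)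
  ultimately show ?thesis using discr by blast
qed

lemma contraction:
  assumes pos: "\<forall>x. \<pi> x \<ge> 0" and sa: "selfadj \<pi> N" and ps: "psd \<pi> N"
    and clo: "\<And>f. V f \<Longrightarrow> V (app N f)"
    and ray: "\<And>f. V f \<Longrightarrow> ip \<pi> (app N f) f \<le> c * ip \<pi> f f"
    and c0: "c \<ge> 0" and Vf: "V f"
  shows "nrm \<pi> (app N f) \<le> c * nrm \<pi> f"
proof -
  define g where "g = app N f"
  have Vg: "V g" using clo[OF Vf] by (simp add: g_def)
  have n2g: "(nrm \<pi> g)\<^sup>2 = ip \<pi> (app N f) g" using nrm_sq[OF pos] by (simp add: g_def)
  have Bff: "0 \<le> ip \<pi> (app N f) f" "ip \<pi> (app N f) f \<le> c * (nrm \<pi> f)\<^sup>2"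
    using ps ray[OF Vf] nrm_sq[OF pos] by (auto simp: psd_def)
  have Bgg: "0 \<le> ip \<pi> (app N g) g" "ip \<pi> (app N g) g \<le> c * (nrm \<pi> g)\<^sup>2"
    using ps ray[OF Vg] nrm_sq[OF pos] by (auto simp: psd_def)
  have "((nrm \<pi> g)\<^sup>2)\<^sup>2 \<le> ip \<pi> (app N f) f * ip \<pi> (app N g) g"
    using psd_cs[OF sa ps, of f g] n2g by simp
  also have "\<dots> \<le> (c * (nrm \<pi> f)\<^sup>2) * (c * (nrm \<pi> g)\<^sup>2)"
    using Bff Bgg c0 by (intro mult_mono) auto
  finally have key: "((nrm \<pi> g)\<^sup>2)\<^sup>2 \<le> (c * (nrm \<pi> f)\<^sup>2) * (c * (nrm \<pi> g)\<^sup>2)" .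
  show ?thesis
  proof (cases "nrm \<pi> g = 0")
    case True then show ?thesis using c0 nrm_nonneg[of \<pi> f] by (simp add: g_def)
  next
    case False
    then have pg: "(nrm \<pi> g)\<^sup>2 > 0" using nrm_nonneg[of \<pi> g] by simp
    from key have "(nrm \<pi> g)\<^sup>2 * (nrm \<pi> g)\<^sup>2 \<le> (c * nrm \<pi> f)\<^sup>2 * (nrm \<pi> g)\<^sup>2"
      by (simp only: power2_eq_square mult_ac)
    then have "(nrm \<pi> g)\<^sup>2 \<le> (c * nrm \<pi> f)\<^sup>2" by (rule mult_right_le_imp_le[OF _ pg])
    then have "nrm \<pi> g \<le> c * nrm \<pi> f"
      using c0 nrm_nonneg[of \<pi> f] nrm_nonneg[of \<pi> g] by (simp add: power2_le_iff_abs_le)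
    then show ?thesis by (simp add: g_def)
  qed
qed

lemma contraction_pow:
  assumes pos: "\<forall>x. \<pi> x \<ge> 0" and sa: "selfadj \<pi> N" and ps: "psd \<pi> N"
    and clo: "\<And>f. V f \<Longrightarrow> V (app N f)"
    and ray: "\<And>f. V f \<Longrightarrow> ip \<pi> (app N f) f \<le> c * ip \<pi> f f"
    and c0: "c \<ge> 0" and Vf: "V f"
  shows "V ((app N ^^ k) f) \<and> nrm \<pi> ((app N ^^ k) f) \<le> c ^ k * nrm \<pi> f"
proof (induction k)
  case 0 then show ?case using Vf by simp
next
  case (Suc k)
  then have V: "V ((app N ^^ k) f)" by simp
  have "nrm \<pi> ((app N ^^ Suc k) f) \<le> c * nrm \<pi> ((app N ^^ k) f)"
    using contraction[OF pos sa ps clo ray c0 V] by simp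
  also have "\<dots> \<le> c * (c ^ k * nrm \<pi> f)" using Suc c0 by (simp add: mult_left_mono)
  finally show ?case using clo[OF V] by simp
qed

lemma pw_pow_sums: "(\<lambda>k. pw v k * c ^ k) sums (exp (- v) * exp (v * c))"
proof -
  have "(\<lambda>n. (v * c) ^ n /\<^sub>R fact n) sums exp (v * c)" by (rule exp_converges)
  then have "(\<lambda>n. exp (-v) * ((v * c) ^ n /\<^sub>R fact n)) sums (exp (-v) * exp (v * c))"
    by (rule sums_mult)
  then show ?thesis by (simp add: pw_def power_mult_distrib divide_inverse mult_ac)
qed

lemma heat_lazy:
  assumes T: "substoch T" and u: "u \<ge> 0"
  shows "heat T u f = (\<lambda>x. \<Sum>k. pw (2 * u) k * (app (lazy T) ^^ k) f x)"
proof
  fix x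
  obtain B where B: "\<forall>x. \<bar>f x\<bar> \<le> B" using finite_bound by blast
  have "heat T u f x = (\<Sum>k. pw (2 * u) k * (\<Sum>j\<le>k. of_nat (k choose j) / 2 ^ k * (app T ^^ j) f x))"
    unfolding heat_def
    by (rule poisson_lazy[OF u, of _ B]) (use substoch_pow_bound[OF T] B in blast)
  also have "\<dots> = (\<Sum>k. pw (2 * u) k * (app (lazy T) ^^ k) f x)"
    by (simp add: lazy_pow)
  finally show "heat T u f x = (\<Sum>k. pw (2 * u) k * (app (lazy T) ^^ k) f x)" .
qed

lemma heat_contract:
  assumes T: "substoch T" and u: "u \<ge> 0"
    and pos: "\<forall>x. \<pi> x \<ge> 0" and sa: "selfadj \<pi> (lazy T)" and ps: "psd \<pi> (lazy T)"
    and clo: "\<And>f. V f \<Longrightarrow> V (app (lazy T) f)"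
    and ray: "\<And>f. V f \<Longrightarrow> ip \<pi> (app (lazy T) f) f \<le> c * ip \<pi> f f"
    and c0: "c \<ge> 0" and Vf: "V f"
  shows "nrm \<pi> (heat T u f) \<le> exp (- 2 * u * (1 - c)) * nrm \<pi> f"
proof -
  obtain B where B: "\<forall>x. \<bar>f x\<bar> \<le> B" using finite_bound by blast
  have u2: "2 * u \<ge> 0" using u by simp
  have sx: "summable (\<lambda>k. pw (2 * u) k * (app (lazy T) ^^ k) f x)" for x
    by (rule pw_summable_bdd'[OF u2, of _ B]) (use substoch_pow_bound[OF substoch_lazy[OF T]] B in blast)
  have bd: "\<bar>pw (2 * u) k\<bar> * nrm \<pi> ((app (lazy T) ^^ k) f) \<le> pw (2 * u) k * c ^ k * nrm \<pi> f" for k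
    using contraction_pow[OF pos sa ps clo ray c0 Vf, of k] pw_nonneg[OF u2, of k]
    by (simp add: mult_left_mono mult.assoc)
  have sm: "(\<lambda>k. pw (2 * u) k * c ^ k * nrm \<pi> f) sums (exp (- (2 * u)) * exp (2 * u * c) * nrm \<pi> f)"
    by (rule sums_mult2[OF pw_pow_sums])
  have "nrm \<pi> (heat T u f) \<le> (\<Sum>k. pw (2 * u) k * c ^ k * nrm \<pi> f)"
    unfolding heat_lazy[OF T u]
    by (rule nrm_series[OF pos sx bd]) (use sm sums_summable in blast)
  also have "\<dots> = exp (- (2 * u)) * exp (2 * u * c) * nrm \<pi> f" using sm sums_unique by metis
  also have "exp (- (2 * u)) * exp (2 * u * c) = exp (- 2 * u * (1 - c))"
    by (simp add: mult_exp_exp algebra_simps)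
  finally show ?thesis .
qed

lemma stoch_substoch: "stochastic P \<Longrightarrow> substoch P"
  by (simp add: stochastic_def substoch_def)

lemma rev_selfadj: "reversible P \<pi> \<Longrightarrow> selfadj \<pi> P"
  by (simp add: reversible_def selfadj_def)

lemma stationary:
  assumes "stochastic P" "reversible P \<pi>"
  shows "(\<Sum>x\<in>UNIV. \<pi> x * P x y) = \<pi> y"
proof -
  have "(\<Sum>x\<in>UNIV. \<pi> x * P x y) = (\<Sum>x\<in>UNIV. \<pi> y * P y x)"
    using assms(2) by (simp add: reversible_def)
  also have "\<dots> = \<pi> y * (\<Sum>x\<in>UNIV. P y x)" by (simp add: sum_distrib_left)
  finally show ?thesis using assms(1) by (simp add: stochastic_def)
qed

lemma mean_app:
  assumes "stochastic P" "reversible P \<pi>"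
  shows "(\<Sum>x\<in>UNIV. \<pi> x * app P f x) = (\<Sum>x\<in>UNIV. \<pi> x * f x)"
proof -
  have "(\<Sum>x\<in>UNIV. \<pi> x * app P f x) = (\<Sum>y\<in>UNIV. (\<Sum>x\<in>UNIV. \<pi> x * P x y) * f y)"
    unfolding app_def sum_distrib_left sum_distrib_right
    by (subst sum.swap) (simp add: mult_ac)
  then show ?thesis using stationary[OF assms] by simp
qed

lemma app_const:
  assumes "stochastic P"
  shows "app P (\<lambda>_. c) = (\<lambda>_. c)"
  using assms by (auto simp: app_def stochastic_def sum_distrib_right[symmetric])

lemma mpow_nonneg:
  assumes "stochastic P"
  shows "mpow P n x y \<ge> 0"
  using assms by (induction n arbitrary: x) (auto simp: stochastic_def intro!: sum_nonneg)

lemma finite_argmax: "\<exists>x. \<forall>y. (g::'a::finite \<Rightarrow> real) y \<le> g x"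
proof -
  have "Max (range g) \<in> range g" by (rule Max_in) auto
  then obtain x where x: "g x = Max (range g)" by (metis rangeE)
  have "g y \<le> Max (range g)" for y by (rule Max_ge) auto
  then show ?thesis using x by metis
qed

lemma eigen_app: "eigenvalue P mu \<longleftrightarrow> (\<exists>v. v \<noteq> (\<lambda>_. 0) \<and> app P v = (\<lambda>x. mu * v x))"
  unfolding eigenvalue_def app_def by (auto simp: fun_eq_iff)

lemma eigen_abs_le:
  assumes "stochastic P" "eigenvalue P mu"
  shows "\<bar>mu\<bar> \<le> 1"
proof -
  obtain v where v: "v \<noteq> (\<lambda>_. 0)" "app P v = (\<lambda>x. mu * v x)" using assms(2) eigen_app by blast
  obtain x where x: "\<forall>y. \<bar>v y\<bar> \<le> \<bar>v x\<bar>"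
    using finite_argmax[of "\<lambda>y. \<bar>v y\<bar>"] by blast
  have vx: "\<bar>v x\<bar> > 0"
  proof (rule ccontr)
    assume "\<not> \<bar>v x\<bar> > 0" then have "\<forall>y. v y = 0" using x by (metis abs_le_zero_iff not_less order_trans)
    then show False using v(1) by auto
  qed
  have "\<bar>mu\<bar> * \<bar>v x\<bar> = \<bar>app P v x\<bar>" using v(2) by (simp add: abs_mult)
  also have "\<dots> \<le> \<bar>v x\<bar>"
    by (rule substoch_bound[OF stoch_substoch[OF assms(1)]]) (use x in auto)
  finally show ?thesis using vx by simp
qed

lemma harmonic_const:
  assumes P: "stochastic P" and irr: "irreducible_chain P"
    and h: "app P f = f"
  shows "f y = f z"
proof -
  obtain x0 where x0: "\<forall>y. f y \<le> f x0"
    using finite_argmax[of f] by blast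
  define M where "M = f x0"
  have step: "f y = M" if "f x = M" "P x y > 0" for x y
  proof (rule ccontr)
    assume ne: "f y \<noteq> M"
    then have lt: "f y < M" using x0 M_def by (metis order_le_less)
    have "(\<Sum>w\<in>UNIV. P x w * (M - f w)) = M * (\<Sum>w\<in>UNIV. P x w) - app P f x"
      by (simp add: app_def algebra_simps sum_subtractf sum_distrib_left)
    also have "\<dots> = 0" using P that(1) h by (simp add: stochastic_def fun_eq_iff)
    finally have z: "(\<Sum>w\<in>UNIV. P x w * (M - f w)) = 0" .
    have nn: "\<And>w. w \<in> UNIV \<Longrightarrow> 0 \<le> P x w * (M - f w)"
      using P x0 M_def by (auto simp: stochastic_def)
    have "\<forall>w\<in>UNIV. P x w * (M - f w) = 0"
      using sum_nonneg_eq_0_iff[of UNIV "\<lambda>w. P x w * (M - f w)"] nn z by simp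
    then have "P x y * (M - f y) = 0" by simp
    then show False using that(2) lt by simp
  qed
  have reach: "f y = M" if "mpow P n x y > 0" "f x = M" for n x y
    using that
  proof (induction n arbitrary: x)
    case 0 then show ?case by (simp split: if_splits)
  next
    case (Suc n)
    have "(\<Sum>w\<in>UNIV. P x w * mpow P n w y) > 0" using Suc.prems by simp
    then have "\<exists>w. P x w * mpow P n w y > 0"
    proof (rule contrapos_pp)
      assume "\<not> (\<exists>w. P x w * mpow P n w y > 0)"
      then have "\<forall>w. P x w * mpow P n w y \<le> 0" by (simp add: not_less)
      then have "(\<Sum>w\<in>UNIV. P x w * mpow P n w y) \<le> 0" by (simp add: sum_nonpos)
      then show "\<not> (\<Sum>w\<in>UNIV. P x w * mpow P n w y) > 0" by simp
    qed
    then obtain w where w: "P x w * mpow P n w y > 0" by blast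
    have pw0: "P x w \<ge> 0" "mpow P n w y \<ge> 0" using P mpow_nonneg[OF P] by (auto simp: stochastic_def)
    then have "P x w > 0" "mpow P n w y > 0" using w by (auto simp: zero_less_mult_iff)
    then show ?case using Suc step by blast
  qed
  have "\<forall>y. f y = M"
  proof
    fix y obtain n where "mpow P n x0 y > 0" using irr by (auto simp: irreducible_chain_def)
    then show "f y = M" using reach M_def by blast
  qed
  then show ?thesis by simp
qed

lemma cont_vec_nth[continuous_intros]: "continuous_on S (\<lambda>w::real^'n. w $ i)"
  by (rule linear_continuous_on[OF bounded_linear_vec_nth])

locale chain =
  fixes P :: "'a::finite \<Rightarrow> 'a \<Rightarrow> real" and \<pi> :: "'a \<Rightarrow> real"
  assumes stoch: "stochastic P" and irr: "irreducible_chain P"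
    and pos: "\<forall>x. \<pi> x > 0" and sum1: "(\<Sum>x\<in>UNIV. \<pi> x) = 1"
    and rev: "reversible P \<pi>" and card2: "CARD('a) \<ge> 2"
begin

lemma pos0: "\<forall>x. \<pi> x \<ge> 0" using pos by (simp add: less_imp_le)
lemma pos_gt[simp]: "\<pi> x > 0" using pos by simp
lemma pos_ne[simp]: "\<pi> x \<noteq> 0" using pos by (metis less_irrefl)
lemma pos_ge[simp]: "\<pi> x \<ge> 0" using pos by (simp add: less_imp_le)

lemma sa: "selfadj \<pi> P" using rev by (rule rev_selfadj)

lemma ip_scale1: "ip \<pi> (\<lambda>x. c * f x) g = c * ip \<pi> f g"
  by (simp add: ip_def sum_distrib_left mult_ac)

lemma ip_zero_iff: "ip \<pi> f f = 0 \<longleftrightarrow> f = (\<lambda>_. 0)"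
proof
  assume z: "ip \<pi> f f = 0"
  have nn: "\<And>x. x \<in> UNIV \<Longrightarrow> 0 \<le> \<pi> x * f x * f x"
    using pos0 by (simp add: mult.assoc)
  have "\<forall>x\<in>UNIV. \<pi> x * f x * f x = 0"
    using sum_nonneg_eq_0_iff[of UNIV "\<lambda>x. \<pi> x * f x * f x"] nn z by (simp add: ip_def)
  then show "f = (\<lambda>_. 0)" by (auto simp: fun_eq_iff)
qed (simp add: ip_def)

lemma eig_orth:
  assumes "app P v = (\<lambda>x. mu * v x)" "app P w = (\<lambda>x. nu * w x)" "mu \<noteq> nu"
  shows "ip \<pi> v w = 0"
proof -
  have "mu * ip \<pi> v w = ip \<pi> (app P v) w" using assms(1) by (simp add: ip_scale1)
  also have "\<dots> = ip \<pi> v (app P w)" by (rule selfadj_ip[OF sa])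
  also have "\<dots> = nu * ip \<pi> v w" using assms(2) ip_scale1 ip_sym by metis
  finally show ?thesis using assms(3) by simp
qed

definition eset where "eset = {mu. eigenvalue P mu \<and> mu \<noteq> 1}"

lemma emb_zero: "emb \<pi> f = 0 \<Longrightarrow> f = (\<lambda>_. 0)"
  by (auto simp: vec_eq_iff emb_nth fun_eq_iff)

lemma finite_eset: "finite eset"
proof -
  define ev where "ev mu = (SOME v. v \<noteq> (\<lambda>_. 0) \<and> app P v = (\<lambda>x. mu * v x))" for mu
  have ev: "ev mu \<noteq> (\<lambda>_. 0) \<and> app P (ev mu) = (\<lambda>x. mu * ev mu x)" if "mu \<in> eset" for mu
  proof -
    have "\<exists>v. v \<noteq> (\<lambda>_. 0) \<and> app P v = (\<lambda>x. mu * v x)"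
      using that eigen_app by (auto simp: eset_def)
    then show ?thesis unfolding ev_def by (rule someI_ex)
  qed
  define E where "E mu = emb \<pi> (ev mu)" for mu
  have orth: "inner (E mu) (E nu) = 0" if "mu \<in> eset" "nu \<in> eset" "mu \<noteq> nu" for mu nu
    using eig_orth[of "ev mu" mu "ev nu" nu] ev that inner_emb[OF pos0] by (simp add: E_def)
  have nz: "E mu \<noteq> 0" if "mu \<in> eset" for mu
    using ev[OF that] emb_zero by (auto simp: E_def)
  have inj: "inj_on E eset"
  proof (rule inj_onI)
    fix mu nu assume a: "mu \<in> eset" "nu \<in> eset" "E mu = E nu"
    show "mu = nu"
    proof (rule ccontr)
      assume "mu \<noteq> nu"
      then have "inner (E mu) (E mu) = 0" using orth[OF a(1,2)] a(3) by simp
      then show False using nz[OF a(1)] by simp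
    qed
  qed
  have "pairwise orthogonal (E ` eset)"
    unfolding pairwise_def orthogonal_def using orth by (auto)
  moreover have "0 \<notin> E ` eset" using nz by auto
  ultimately have "independent (E ` eset)" by (rule pairwise_orthogonal_independent)
  then have "finite (E ` eset)" using independent_bound by blast
  then show ?thesis using inj finite_imageD by blast
qed

definition avec :: "real ^ 'a" where "avec = (\<chi> x. sqrt (\<pi> x))"
definition unemb :: "real ^ 'a \<Rightarrow> 'a \<Rightarrow> real" where "unemb w = (\<lambda>x. w $ x / sqrt (\<pi> x))"
definition Ssph where "Ssph = sphere (0::real^'a) 1 \<inter> {w. inner avec w = 0}"
definition Rq where "Rq w = ip \<pi> (app P (unemb w)) (unemb w)"

lemma emb_unemb: "emb \<pi> (unemb w) = w"
  by (simp add: vec_eq_iff emb_nth unemb_def)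

lemma unemb_emb: "unemb (emb \<pi> f) = f"
  by (simp add: fun_eq_iff emb_nth unemb_def)

lemma inner_avec: "inner avec (emb \<pi> f) = (\<Sum>x\<in>UNIV. \<pi> x * f x)"
  using pos0 by (simp add: inner_vec_def avec_def emb_nth mult.assoc[symmetric])

lemma compact_S: "compact Ssph"
  unfolding Ssph_def by (intro compact_Int_closed compact_sphere closed_hyperplane)

lemma cont_R: "continuous_on Ssph Rq"
  unfolding Rq_def ip_def app_def unemb_def
  by (intro continuous_intros) (use pos in \<open>auto\<close>)

lemma normalize_in_S:
  assumes m: "(\<Sum>x\<in>UNIV. \<pi> x * g x) = 0" and nz: "g \<noteq> (\<lambda>_. 0)"
  shows "emb \<pi> (\<lambda>x. g x / nrm \<pi> g) \<in> Ssph"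
    and "Rq (emb \<pi> (\<lambda>x. g x / nrm \<pi> g)) = ip \<pi> (app P g) g / (nrm \<pi> g)\<^sup>2"
proof -
  have ipg: "ip \<pi> g g \<noteq> 0" using nz ip_zero_iff by simp
  have ng: "nrm \<pi> g > 0" using nrm_sq[OF pos0, of g] ipg nrm_nonneg[of \<pi> g]
    by (metis less_eq_real_def power_zero_numeral)
  have e: "emb \<pi> (\<lambda>x. g x / nrm \<pi> g) = (1 / nrm \<pi> g) *\<^sub>R emb \<pi> g"
    by (simp add: vec_eq_iff emb_nth)
  show "emb \<pi> (\<lambda>x. g x / nrm \<pi> g) \<in> Ssph"
    unfolding Ssph_def e using ng m inner_avec[of g]
    by (simp add: nrm_def inner_scaleR_right)
  have a: "app P (\<lambda>x. g x / nrm \<pi> g) = (\<lambda>x. app P g x / nrm \<pi> g)"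
    using app_scale[of P "1 / nrm \<pi> g" g] by (simp add: mult.commute)
  show "Rq (emb \<pi> (\<lambda>x. g x / nrm \<pi> g)) = ip \<pi> (app P g) g / (nrm \<pi> g)\<^sup>2"
    unfolding Rq_def unemb_emb a using ng
    by (simp add: ip_def sum_divide_distrib power2_eq_square)
qed

lemma two_points: "\<exists>x y::'a. x \<noteq> y"
proof (rule ccontr)
  assume "\<not> ?thesis"
  then have "\<forall>x y::'a. x = y" by blast
  then have u: "UNIV = {undefined::'a}" by auto
  have "CARD('a) = card {undefined::'a}" by (simp only: u)
  then have "CARD('a) = 1" by simp
  then show False using card2 by simp
qed

lemma S_nonempty: "Ssph \<noteq> {}"
proof -
  obtain x y :: 'a where xy: "x \<noteq> y" using two_points by blast
  define g where "g z = (if z = x then 1 / \<pi> x else 0) - (if z = y then 1 / \<pi> y else 0)" for z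
  have m: "(\<Sum>z\<in>UNIV. \<pi> z * g z) = 0"
    using xy by (simp add: g_def right_diff_distrib sum_subtractf if_distrib[of "\<lambda>c. \<pi> _ * c"] cong: if_cong)
  have nz: "g \<noteq> (\<lambda>_. 0)"
  proof
    assume "g = (\<lambda>_. 0)" then have "g x = 0" by simp
    then show False using xy by (simp add: g_def)
  qed
  show ?thesis using normalize_in_S(1)[OF m nz] by blast
qed

end

lemma alg:
  fixes A X Y Q G mu \<tau> :: real
  assumes "A + \<tau> * X + \<tau> * (X + \<tau> * Q) \<le> mu * (1 + \<tau> * Y + \<tau> * (Y + \<tau> * G))" "A = mu"
  shows "0 \<le> 0 + 2 * (mu * Y - X) * \<tau> + (mu * G - Q) * \<tau>\<^sup>2"
proof -
  have "mu * (1 + \<tau> * Y + \<tau> * (Y + \<tau> * G)) = mu + 2 * (mu * Y) * \<tau> + mu * G * \<tau>\<^sup>2"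
    by (simp add: power2_eq_square algebra_simps)
  moreover have "A + \<tau> * X + \<tau> * (X + \<tau> * Q) = A + 2 * X * \<tau> + Q * \<tau>\<^sup>2"
    by (simp add: power2_eq_square algebra_simps)
  moreover have "2 * (mu * Y - X) * \<tau> + (mu * G - Q) * \<tau>\<^sup>2 = (2 * (mu * Y) * \<tau> + mu * G * \<tau>\<^sup>2) - (2 * X * \<tau> + Q * \<tau>\<^sup>2)"
    by (simp add: algebra_simps)
  ultimately show ?thesis using assms by linarith
qed

context chain begin

lemma exists_max: "\<exists>w0\<in>Ssph. \<forall>w\<in>Ssph. Rq w \<le> Rq w0"
  by (rule continuous_attains_sup[OF compact_S S_nonempty cont_R])

definition w0 where "w0 = (SOME w0. w0 \<in> Ssph \<and> (\<forall>w\<in>Ssph. Rq w \<le> Rq w0))"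
definition f0 where "f0 = unemb w0"
definition mu0 where "mu0 = Rq w0"

lemma w0: "w0 \<in> Ssph" "\<And>w. w \<in> Ssph \<Longrightarrow> Rq w \<le> Rq w0"
  using someI_ex[OF exists_max[unfolded Bex_def]] unfolding w0_def[symmetric] by auto

lemma f0_props: "ip \<pi> f0 f0 = 1" "(\<Sum>x\<in>UNIV. \<pi> x * f0 x) = 0" "ip \<pi> (app P f0) f0 = mu0"
proof -
  have e: "emb \<pi> f0 = w0" by (simp add: f0_def emb_unemb)
  have "norm w0 = 1" "inner avec w0 = 0" using w0(1) by (auto simp: Ssph_def)
  then show "ip \<pi> f0 f0 = 1" "(\<Sum>x\<in>UNIV. \<pi> x * f0 x) = 0"
    using nrm_sq[OF pos0, of f0] inner_avec[of f0] e by (auto simp: nrm_def)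
  show "ip \<pi> (app P f0) f0 = mu0" by (simp add: mu0_def Rq_def f0_def)
qed

lemma ray_bound:
  assumes m: "(\<Sum>x\<in>UNIV. \<pi> x * g x) = 0"
  shows "ip \<pi> (app P g) g \<le> mu0 * ip \<pi> g g"
proof (cases "g = (\<lambda>_. 0)")
  case True then show ?thesis by (simp add: ip_def)
next
  case False
  have ipz: "ip \<pi> g g \<noteq> 0" using False ip_zero_iff by blast
  have ipg: "ip \<pi> g g > 0" using ipz ip_self_nonneg[OF pos0, of g] by linarith
  have n2: "(nrm \<pi> g)\<^sup>2 = ip \<pi> g g" by (rule nrm_sq[OF pos0])
  have "Rq (emb \<pi> (\<lambda>x. g x / nrm \<pi> g)) \<le> Rq w0"
    by (rule w0(2)[OF normalize_in_S(1)[OF m False]])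
  then have "ip \<pi> (app P g) g / ip \<pi> g g \<le> mu0"
    unfolding normalize_in_S(2)[OF m False] n2 mu0_def .
  then show ?thesis using pos_divide_le_eq[OF ipg] by simp
qed

lemma lagrange:
  assumes m: "(\<Sum>x\<in>UNIV. \<pi> x * g x) = 0"
  shows "ip \<pi> (app P f0) g = mu0 * ip \<pi> f0 g"
proof -
  define b where "b = mu0 * ip \<pi> f0 g - ip \<pi> (app P f0) g"
  define c where "c = mu0 * ip \<pi> g g - ip \<pi> (app P g) g"
  have c0: "c \<ge> 0" using ray_bound[OF m] by (simp add: c_def)
  have sym1: "ip \<pi> (app P g) f0 = ip \<pi> (app P f0) g"
    using selfadj_ip[OF sa, of g f0] ip_sym by metis
  have "0 \<le> 0 + 2 * b * \<tau> + c * \<tau>\<^sup>2" for \<tau>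
  proof -
    have mh: "(\<Sum>x\<in>UNIV. \<pi> x * (f0 x + \<tau> * g x)) = 0"
    proof -
      have "(\<Sum>x\<in>UNIV. \<pi> x * (f0 x + \<tau> * g x)) = (\<Sum>x\<in>UNIV. \<pi> x * f0 x) + \<tau> * (\<Sum>x\<in>UNIV. \<pi> x * g x)"
        by (simp add: distrib_left sum.distrib sum_distrib_left mult_ac)
      then show ?thesis using m f0_props(2) by simp
    qed
    have "ip \<pi> (app P (\<lambda>x. f0 x + \<tau> * g x)) (\<lambda>x. f0 x + \<tau> * g x)
          \<le> mu0 * ip \<pi> (\<lambda>x. f0 x + \<tau> * g x) (\<lambda>x. f0 x + \<tau> * g x)"
      by (rule ray_bound[OF mh])
    then have "ip \<pi> (app P f0) f0 + \<tau> * ip \<pi> (app P f0) g + \<tau> * (ip \<pi> (app P g) f0 + \<tau> * ip \<pi> (app P g) g)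
      \<le> mu0 * (ip \<pi> f0 f0 + \<tau> * ip \<pi> f0 g + \<tau> * (ip \<pi> g f0 + \<tau> * ip \<pi> g g))"
      unfolding app_lin ip_add1 ip_add2 by simp
    then have H: "mu0 + \<tau> * ip \<pi> (app P f0) g + \<tau> * (ip \<pi> (app P f0) g + \<tau> * ip \<pi> (app P g) g)
      \<le> mu0 * (1 + \<tau> * ip \<pi> f0 g + \<tau> * (ip \<pi> f0 g + \<tau> * ip \<pi> g g))"
      by (simp only: sym1 f0_props(1,3) ip_sym[of \<pi> g f0])
    show ?thesis unfolding b_def c_def by (rule alg[OF H refl])
  qed
  then have "b\<^sup>2 \<le> 0 * c" using discr[OF _ c0] by blast
  then have "b = 0" by simp
  then show ?thesis by (simp add: b_def)
qed

lemma f0_eigen: "app P f0 = (\<lambda>x. mu0 * f0 x)"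
proof -
  define g where "g x = app P f0 x - mu0 * f0 x" for x
  have s: "(\<Sum>x\<in>UNIV. \<pi> x * (mu0 * f0 x)) = mu0 * (\<Sum>x\<in>UNIV. \<pi> x * f0 x)"
    by (simp add: sum_distrib_left mult_ac)
  have m: "(\<Sum>x\<in>UNIV. \<pi> x * g x) = 0"
    using mean_app[OF stoch rev, of f0] f0_props(2)
    by (simp add: g_def right_diff_distrib sum_subtractf s)
  have "ip \<pi> (app P f0) g - mu0 * ip \<pi> f0 g =
     (\<Sum>x\<in>UNIV. \<pi> x * app P f0 x * g x - mu0 * (\<pi> x * f0 x * g x))"
    by (simp add: ip_def sum_subtractf sum_distrib_left)
  also have "\<dots> = ip \<pi> g g" unfolding ip_def by (rule sum.cong) (simp_all add: g_def algebra_simps)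
  finally have "ip \<pi> g g = ip \<pi> (app P f0) g - mu0 * ip \<pi> f0 g" by simp
  also have "\<dots> = 0" using lagrange[OF m] by simp
  finally have "g = (\<lambda>_. 0)" using ip_zero_iff by simp
  then show ?thesis by (auto simp: g_def fun_eq_iff)
qed

lemma mu0_in: "mu0 \<in> eset"
proof -
  have nz: "f0 \<noteq> (\<lambda>_. 0)" using f0_props(1) by (auto simp: ip_def)
  have ev: "eigenvalue P mu0" using f0_eigen nz eigen_app by blast
  have "mu0 \<noteq> 1"
  proof
    assume "mu0 = 1"
    then have "app P f0 = f0" using f0_eigen by simp
    then have c: "\<And>y. f0 y = f0 undefined" using harmonic_const[OF stoch irr] by blast
    have "(\<Sum>x\<in>UNIV. \<pi> x * f0 x) = f0 undefined"
      using sum1 by (subst c) (simp add: sum_distrib_right[symmetric])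
    then have "f0 undefined = 0" using f0_props(2) by simp
    then have "f0 = (\<lambda>_. 0)" using c by auto
    then show False using nz by simp
  qed
  then show ?thesis using ev by (simp add: eset_def)
qed

lemma mu0_le: "mu0 \<le> lambda2 P"
  unfolding lambda2_def eset_def[symmetric] using finite_eset mu0_in by (rule Max_ge)

lemma lambda2_lt1: "lambda2 P < 1"
proof -
  have "eset \<noteq> {}" using mu0_in by blast
  then have "lambda2 P \<in> eset" unfolding lambda2_def eset_def[symmetric] using finite_eset by (intro Max_in)
  then have "eigenvalue P (lambda2 P)" "lambda2 P \<noteq> 1" by (auto simp: eset_def)
  then show ?thesis using eigen_abs_le[OF stoch] by fastforce
qed

lemma lambda2_ge: "lambda2 P \<ge> -1"
proof -
  have "eigenvalue P mu0" using mu0_in by (simp add: eset_def)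
  then have "mu0 \<ge> -1" using eigen_abs_le[OF stoch] by fastforce
  then show ?thesis using mu0_le by simp
qed

lemma poincare:
  assumes "(\<Sum>x\<in>UNIV. \<pi> x * f x) = 0"
  shows "ip \<pi> (app P f) f \<le> lambda2 P * ip \<pi> f f"
proof -
  have "ip \<pi> (app P f) f \<le> mu0 * ip \<pi> f f" by (rule ray_bound[OF assms])
  also have "\<dots> \<le> lambda2 P * ip \<pi> f f"
    using mu0_le ip_self_nonneg[OF pos0, of f] by (simp add: mult_right_mono)
  finally show ?thesis .
qed

end

lemma selfadj_lazy: "selfadj \<pi> T \<Longrightarrow> selfadj \<pi> (lazy T)"
  by (auto simp: selfadj_def lazy_def algebra_simps)

lemma ip_lazy: "ip \<pi> (app (lazy T) f) f = (ip \<pi> f f + ip \<pi> (app T f) f) / 2"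
proof -
  have "ip \<pi> (app (lazy T) f) f = (\<Sum>x\<in>UNIV. (\<pi> x * f x * f x + \<pi> x * app T f x * f x) / 2)"
    unfolding ip_def app_lazy by (rule sum.cong) (simp_all add: algebra_simps)
  also have "\<dots> = (ip \<pi> f f + ip \<pi> (app T f) f) / 2"
    by (simp add: ip_def sum_divide_distrib[symmetric] sum.distrib)
  finally show ?thesis .
qed

lemma ip_lower:
  assumes T: "substoch T" and sa: "selfadj \<pi> T" and pos: "\<forall>x. \<pi> x \<ge> 0"
  shows "ip \<pi> (app T f) f \<ge> - ip \<pi> f f"
proof -
  have w0: "\<pi> x * T x y \<ge> 0" for x y using T pos by (simp add: substoch_def)
  have t: "\<pi> x * T x y * f y * f x \<ge> - (\<pi> x * T x y * (f x)\<^sup>2 + \<pi> y * T y x * (f y)\<^sup>2) / 2" for x y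
  proof -
    have e: "\<pi> y * T y x = \<pi> x * T x y" using sa by (simp add: selfadj_def)
    have "0 \<le> (f x + f y)\<^sup>2" by simp
    then have "- ((f x)\<^sup>2 + (f y)\<^sup>2) / 2 \<le> f y * f x" by (simp add: power2_sum field_simps)
    then have "\<pi> x * T x y * (- ((f x)\<^sup>2 + (f y)\<^sup>2) / 2) \<le> \<pi> x * T x y * (f y * f x)"
      by (rule mult_left_mono[OF _ w0])
    then show ?thesis unfolding e by (simp add: algebra_simps)
  qed
  have s1: "(\<Sum>x\<in>UNIV. \<Sum>y\<in>UNIV. \<pi> x * T x y * (f x)\<^sup>2) \<le> ip \<pi> f f"
  proof -
    have "(\<Sum>x\<in>UNIV. \<Sum>y\<in>UNIV. \<pi> x * T x y * (f x)\<^sup>2) = (\<Sum>x\<in>UNIV. (\<pi> x * (f x)\<^sup>2) * (\<Sum>y\<in>UNIV. T x y))"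
      by (simp add: sum_distrib_left sum_distrib_right mult_ac)
    also have "\<dots> \<le> (\<Sum>x\<in>UNIV. (\<pi> x * (f x)\<^sup>2) * 1)"
      using T pos by (intro sum_mono mult_left_mono) (auto simp: substoch_def)
    also have "\<dots> = ip \<pi> f f" by (simp add: ip_def power2_eq_square mult_ac)
    finally show ?thesis .
  qed
  have s2: "(\<Sum>x\<in>UNIV. \<Sum>y\<in>UNIV. \<pi> y * T y x * (f y)\<^sup>2) = (\<Sum>x\<in>UNIV. \<Sum>y\<in>UNIV. \<pi> x * T x y * (f x)\<^sup>2)"
    by (rule sum.swap)
  have "- ip \<pi> f f \<le> - ((\<Sum>x\<in>UNIV. \<Sum>y\<in>UNIV. \<pi> x * T x y * (f x)\<^sup>2) + (\<Sum>x\<in>UNIV. \<Sum>y\<in>UNIV. \<pi> y * T y x * (f y)\<^sup>2)) / 2"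
    using s1 s2 by simp
  also have "\<dots> = (\<Sum>x\<in>UNIV. \<Sum>y\<in>UNIV. - (\<pi> x * T x y * (f x)\<^sup>2 + \<pi> y * T y x * (f y)\<^sup>2) / 2)"
    by (simp add: sum_subtractf sum_negf sum.distrib sum_divide_distrib[symmetric] diff_divide_distrib)
  also have "\<dots> \<le> (\<Sum>x\<in>UNIV. \<Sum>y\<in>UNIV. \<pi> x * T x y * f y * f x)"
    by (intro sum_mono t)
  also have "\<dots> = ip \<pi> (app T f) f"
    by (simp add: ip_def app_def sum_distrib_left sum_distrib_right mult_ac)
  finally show ?thesis .
qed

lemma psd_lazy:
  assumes T: "substoch T" and sa: "selfadj \<pi> T" and pos: "\<forall>x. \<pi> x \<ge> 0"
  shows "psd \<pi> (lazy T)"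
  unfolding psd_def ip_lazy
proof
  fix f show "0 \<le> (ip \<pi> f f + ip \<pi> (app T f) f) / 2" using ip_lower[OF assms, of f] by simp
qed

lemma ip_shift:
  "ip \<pi> (\<lambda>x. a x - m) (\<lambda>x. b x - m) =
   ip \<pi> a b - m * (\<Sum>x\<in>UNIV. \<pi> x * a x) - m * (\<Sum>x\<in>UNIV. \<pi> x * b x) + m\<^sup>2 * (\<Sum>x\<in>UNIV. \<pi> x)"
proof -
  have "ip \<pi> (\<lambda>x. a x - m) (\<lambda>x. b x - m) =
        (\<Sum>x\<in>UNIV. \<pi> x * a x * b x - m * (\<pi> x * a x) - m * (\<pi> x * b x) + m\<^sup>2 * \<pi> x)"
    unfolding ip_def by (rule sum.cong) (simp_all add: algebra_simps power2_eq_square)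
  also have "\<dots> = ip \<pi> a b - m * (\<Sum>x\<in>UNIV. \<pi> x * a x) - m * (\<Sum>x\<in>UNIV. \<pi> x * b x) + m\<^sup>2 * (\<Sum>x\<in>UNIV. \<pi> x)"
    by (simp add: ip_def sum.distrib sum_subtractf sum_distrib_left)
  finally show ?thesis .
qed

locale chainA = chain +
  fixes A :: "'a set"
  assumes Ane: "A \<noteq> {}"
begin

definition eps where "eps = (\<Sum>x\<in>A. \<pi> x)"
definition gam where "gam = 1 - lambda2 P"
definition Kk where "Kk x y = (if x \<in> A \<or> y \<in> A then 0 else P x y)"
definition g0 where "g0 x = (if x \<in> A then 0 else (1::real))"

lemma eps_pos: "eps > 0"
proof -
  obtain a where "a \<in> A" using Ane by blast
  have "\<pi> a \<le> eps" unfolding eps_def using \<open>a \<in> A\<close> by (intro member_le_sum) auto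
  then show ?thesis using pos_gt[of a] by linarith
qed

lemma eps_compl: "(\<Sum>x\<in>UNIV. \<pi> x * (g0 x)\<^sup>2) = 1 - eps"
proof -
  have a: "(\<Sum>x\<in>UNIV. \<pi> x * (g0 x)\<^sup>2) = (\<Sum>x\<in>UNIV. \<pi> x - (if x \<in> A then \<pi> x else 0))"
    by (rule sum.cong) (auto simp: g0_def)
  have b: "(\<Sum>x\<in>UNIV. (if x \<in> A then \<pi> x else 0)) = eps"
    unfolding eps_def using sum.inter_restrict[of UNIV \<pi> A] by simp
  show ?thesis unfolding a sum_subtractf b sum1 ..
qed

lemma eps_le1: "eps \<le> 1"
proof -
  have "0 \<le> (\<Sum>x\<in>UNIV. \<pi> x * (g0 x)\<^sup>2)" by (intro sum_nonneg) simp
  then show ?thesis using eps_compl by simp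
qed

lemma gam_pos: "gam > 0" using lambda2_lt1 by (simp add: gam_def)
lemma gam_le2: "gam \<le> 2" using lambda2_ge by (simp add: gam_def)

lemma substoch_P: "substoch P" by (rule stoch_substoch[OF stoch])

lemma substoch_K: "substoch Kk"
proof -
  have "(\<Sum>y\<in>UNIV. Kk x y) \<le> 1" for x
  proof -
    have "(\<Sum>y\<in>UNIV. Kk x y) \<le> (\<Sum>y\<in>UNIV. P x y)"
      using stoch by (intro sum_mono) (auto simp: Kk_def stochastic_def)
    then show ?thesis using stoch by (simp add: stochastic_def)
  qed
  then show ?thesis using stoch by (auto simp: substoch_def Kk_def stochastic_def)
qed

lemma selfadj_K: "selfadj \<pi> Kk"
  using rev by (auto simp: selfadj_def Kk_def reversible_def)

definition VA where "VA f \<longleftrightarrow> (\<forall>x\<in>A. f x = 0)"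

lemma app_K_zero: "x \<in> A \<Longrightarrow> app Kk f x = 0"
  by (simp add: app_def Kk_def)

lemma app_K_VA: "VA f \<Longrightarrow> app Kk f x * f x = app P f x * f x"
proof (cases "x \<in> A")
  case True
  assume "VA f" then show ?thesis using True by (simp add: VA_def)
next
  case False
  assume V: "VA f"
  have "app Kk f x = app P f x"
    unfolding app_def by (rule sum.cong) (use False V in \<open>auto simp: Kk_def VA_def\<close>)
  then show ?thesis by simp
qed

lemma ip_K: "VA f \<Longrightarrow> ip \<pi> (app Kk f) f = ip \<pi> (app P f) f"
  unfolding ip_def by (rule sum.cong) (simp_all add: mult.assoc app_K_VA)

lemma VA_closed: "VA f \<Longrightarrow> VA (app (lazy Kk) f)"
  by (simp add: VA_def app_lazy app_K_zero)

lemma mean_VA_bound: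
  assumes V: "VA f"
  shows "ip \<pi> (app P f) f \<le> (1 - gam * eps) * ip \<pi> f f"
proof -
  define m where "m = (\<Sum>x\<in>UNIV. \<pi> x * f x)"
  define h where "h x = f x - m" for x
  have mh: "(\<Sum>x\<in>UNIV. \<pi> x * h x) = 0"
    using sum1 by (simp add: h_def m_def right_diff_distrib sum_subtractf sum_distrib_right[symmetric])
  have aph: "app P h = (\<lambda>x. app P f x - m)"
    unfolding h_def app_diff app_const[OF stoch] by simp
  have e1: "ip \<pi> (app P h) h = ip \<pi> (app P f) f - m\<^sup>2"
    unfolding aph h_def ip_shift mean_app[OF stoch rev] sum1 m_def[symmetric]
    by (simp add: power2_eq_square)
  have e2: "ip \<pi> h h = ip \<pi> f f - m\<^sup>2"
    unfolding h_def ip_shift sum1 m_def[symmetric]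
    by (simp add: power2_eq_square)
  have mg: "m = ip \<pi> f g0"
    unfolding m_def ip_def by (rule sum.cong) (use V in \<open>auto simp: g0_def VA_def\<close>)
  have "m\<^sup>2 \<le> (nrm \<pi> f * nrm \<pi> g0)\<^sup>2"
    unfolding mg using ip_cs[OF pos0, of f g0] by (metis abs_le_square_iff abs_mult abs_of_nonneg nrm_nonneg mult_nonneg_nonneg abs_ge_zero)
  also have "\<dots> = ip \<pi> f f * (1 - eps)"
    unfolding power_mult_distrib nrm_sq[OF pos0] using eps_compl by (simp add: ip_def power2_eq_square mult.assoc)
  finally have mb: "m\<^sup>2 \<le> ip \<pi> f f * (1 - eps)" .
  have "ip \<pi> (app P f) f = ip \<pi> (app P h) h + m\<^sup>2" using e1 by simp
  also have "\<dots> \<le> lambda2 P * ip \<pi> h h + m\<^sup>2" using poincare[OF mh] by simp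
  also have "\<dots> = lambda2 P * ip \<pi> f f + gam * m\<^sup>2" unfolding e2 gam_def by (simp add: algebra_simps)
  also have "\<dots> \<le> lambda2 P * ip \<pi> f f + gam * (ip \<pi> f f * (1 - eps))"
    using mb gam_pos by (simp add: mult_left_mono)
  also have "\<dots> = (1 - gam * eps) * ip \<pi> f f" by (simp add: gam_def algebra_simps)
  finally show ?thesis .
qed

lemma heat_K_contract:
  assumes V: "VA f" and u: "u \<ge> 0"
  shows "nrm \<pi> (heat Kk u f) \<le> exp (- u * gam * eps) * nrm \<pi> f"
proof -
  have c0: "1 - gam * eps / 2 \<ge> 0"
  proof -
    have "gam * eps \<le> 2 * 1" using gam_le2 eps_le1 gam_pos eps_pos by (intro mult_mono) auto
    then show ?thesis by simp
  qed
  have ray: "ip \<pi> (app (lazy Kk) g) g \<le> (1 - gam * eps / 2) * ip \<pi> g g" if "VA g" for g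
  proof -
    have b: "ip \<pi> (app P g) g \<le> (1 - gam * eps) * ip \<pi> g g" by (rule mean_VA_bound[OF that])
    have e: "(1 - gam * eps / 2) * ip \<pi> g g = (ip \<pi> g g + (1 - gam * eps) * ip \<pi> g g) / 2"
      by (simp add: algebra_simps)
    show ?thesis unfolding ip_lazy ip_K[OF that] e by (intro divide_right_mono add_left_mono b) simp
  qed
  have "nrm \<pi> (heat Kk u f) \<le> exp (- 2 * u * (1 - (1 - gam * eps / 2))) * nrm \<pi> f"
    by (rule heat_contract[OF substoch_K u pos0 selfadj_lazy[OF selfadj_K]
          psd_lazy[OF substoch_K selfadj_K pos0] VA_closed ray c0 V])
  then show ?thesis by (simp add: algebra_simps)
qed

definition V0 where "V0 f \<longleftrightarrow> (\<Sum>x\<in>UNIV. \<pi> x * f x) = 0"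

lemma V0_closed: "V0 f \<Longrightarrow> V0 (app (lazy P) f)"
  unfolding V0_def app_lazy using mean_app[OF stoch rev, of f]
  by (simp add: sum_divide_distrib[symmetric] distrib_left sum.distrib)

lemma heat_P_contract:
  assumes V: "V0 f" and u: "u \<ge> 0"
  shows "nrm \<pi> (heat P u f) \<le> exp (- u * gam) * nrm \<pi> f"
proof -
  have c0: "(1 + lambda2 P) / 2 \<ge> 0" using lambda2_ge by simp
  have ray: "ip \<pi> (app (lazy P) g) g \<le> (1 + lambda2 P) / 2 * ip \<pi> g g" if "V0 g" for g
  proof -
    have b: "ip \<pi> (app P g) g \<le> lambda2 P * ip \<pi> g g" using poincare[of g] that by (simp add: V0_def)
    have e: "(1 + lambda2 P) / 2 * ip \<pi> g g = (ip \<pi> g g + lambda2 P * ip \<pi> g g) / 2"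
      by (simp add: algebra_simps)
    show ?thesis unfolding ip_lazy e by (intro divide_right_mono add_left_mono b) simp
  qed
  have hc: "nrm \<pi> (heat P u f) \<le> exp (- 2 * u * (1 - (1 + lambda2 P) / 2)) * nrm \<pi> f"
    by (rule heat_contract[OF substoch_P u pos0 selfadj_lazy[OF sa]
          psd_lazy[OF substoch_P sa pos0] V0_closed ray c0 V])
  have eq: "- 2 * u * (1 - (1 + lambda2 P) / 2) = - u * gam" by (simp add: gam_def field_simps)
  show ?thesis using hc[unfolded eq] .
qed

end

lemma app_mono_fun:
  assumes "\<forall>x y. T x y \<ge> 0" "\<And>y. f y \<le> g y"
  shows "app T f x \<le> app T g x"
  unfolding app_def using assms by (intro sum_mono mult_left_mono) auto

lemma app_mono_kernel:
  assumes "\<And>x y. T x y \<le> T' x y" "\<And>y. f y \<ge> 0"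
  shows "app T f x \<le> app T' f x"
  unfolding app_def using assms by (intro sum_mono mult_right_mono) auto

lemma app_nonneg:
  assumes "\<forall>x y. T x y \<ge> 0" "\<And>y. f y \<ge> 0"
  shows "app T f x \<ge> 0"
  unfolding app_def using assms by (intro sum_nonneg mult_nonneg_nonneg) auto

lemma app_pow_nonneg:
  assumes "\<forall>x y. T x y \<ge> 0" "\<And>y. f y \<ge> 0"
  shows "(app T ^^ j) f x \<ge> 0"
proof (induction j arbitrary: x)
  case 0 then show ?case using assms(2) by simp
next
  case (Suc j)
  have "0 \<le> app T ((app T ^^ j) f) x" by (rule app_nonneg[OF assms(1) Suc])
  then show ?case by simp
qed

lemma app_pow_mpow: "(app P ^^ j) h x = (\<Sum>y\<in>UNIV. mpow P j x y * h y)"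
proof (induction j arbitrary: x)
  case 0
  have "(\<Sum>y\<in>UNIV. mpow P 0 x y * h y) = (\<Sum>y\<in>UNIV. if x = y then h y else 0)"
    by (rule sum.cong) auto
  then show ?case by simp
next
  case (Suc j)
  have "(app P ^^ Suc j) h x = (\<Sum>w\<in>UNIV. P x w * (\<Sum>y\<in>UNIV. mpow P j w y * h y))"
    by (simp add: app_def Suc)
  also have "\<dots> = (\<Sum>w\<in>UNIV. \<Sum>y\<in>UNIV. P x w * mpow P j w y * h y)"
    by (simp add: sum_distrib_left mult.assoc)
  also have "\<dots> = (\<Sum>y\<in>UNIV. \<Sum>w\<in>UNIV. P x w * mpow P j w y * h y)"
    by (rule sum.swap)
  also have "\<dots> = (\<Sum>y\<in>UNIV. (\<Sum>w\<in>UNIV. P x w * mpow P j w y) * h y)"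
    by (simp add: sum_distrib_right)
  finally show ?case by simp
qed

lemma app_pow_add_const:
  assumes "stochastic P"
  shows "(app P ^^ k) (\<lambda>x. h x + c) = (\<lambda>x. (app P ^^ k) h x + c)"
proof (induction k)
  case 0 then show ?case by simp
next
  case (Suc k)
  show ?case using Suc by (simp add: app_add app_const[OF assms])
qed

context chainA begin

definition qq where "qq k = (app Kk ^^ k) g0"
definition SS where "SS u = heat Kk u g0"

lemma K_nonneg: "\<forall>x y. Kk x y \<ge> 0" using substoch_K by (simp add: substoch_def)
lemma P_nonneg: "\<forall>x y. P x y \<ge> 0" using stoch by (simp add: stochastic_def)

lemma qq_Suc: "qq (Suc k) = app Kk (qq k)" by (simp add: qq_def)

lemma qq_A: "x \<in> A \<Longrightarrow> qq k x = 0"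
  by (cases k) (simp_all add: qq_def g0_def app_K_zero)

lemma g0_bd: "\<bar>g0 x\<bar> \<le> 1" by (simp add: g0_def)

lemma qq_bounds: "0 \<le> qq k z" "qq k z \<le> 1"
proof -
  show "0 \<le> qq k z" unfolding qq_def by (rule app_pow_nonneg[OF K_nonneg]) (simp add: g0_def)
  have "\<bar>(app Kk ^^ k) g0 z\<bar> \<le> 1" by (rule substoch_pow_bound[OF substoch_K g0_bd])
  then show "qq k z \<le> 1" by (simp add: qq_def)
qed

lemma hit_qq: "hit_prob P A k z = 1 - qq k z"
proof (induction k arbitrary: z)
  case 0 then show ?case by (simp add: qq_def g0_def)
next
  case (Suc k)
  show ?case
  proof (cases "z \<in> A")
    case True then show ?thesis by (simp add: qq_A)
  next
    case False
    have "hit_prob P A (Suc k) z = (\<Sum>y\<in>UNIV. P z y * (1 - qq k y))"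
      using False Suc by simp
    also have "\<dots> = (\<Sum>y\<in>UNIV. P z y) - (\<Sum>y\<in>UNIV. P z y * qq k y)"
      by (simp add: right_diff_distrib sum_subtractf)
    also have "(\<Sum>y\<in>UNIV. P z y * qq k y) = qq (Suc k) z"
      unfolding qq_Suc app_def by (rule sum.cong) (auto simp: Kk_def False qq_A)
    finally show ?thesis using stoch by (simp add: stochastic_def)
  qed
qed

lemma qq_dec: "qq (Suc k) z \<le> qq k z"
proof (induction k arbitrary: z)
  case 0
  show ?case
  proof (cases "z \<in> A")
    case True then show ?thesis by (simp add: qq_A)
  next
    case False
    have "qq (Suc 0) z \<le> 1" by (rule qq_bounds)
    then show ?thesis using False by (simp add: qq_def g0_def)
  qed
next
  case (Suc k)
  show ?case unfolding qq_Suc[of "Suc k"] qq_Suc[of k]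
    by (rule app_mono_fun[OF K_nonneg]) (use Suc qq_Suc in auto)
qed

lemma qq_antimono: "m \<le> n \<Longrightarrow> qq n z \<le> qq m z"
  using lift_Suc_antimono_le[of "\<lambda>k. qq k z"] qq_dec by blast

lemma K_le_P_pow:
  assumes "\<And>y. h y \<ge> 0"
  shows "(app Kk ^^ j) h x \<le> (app P ^^ j) h x"
proof (induction j arbitrary: x)
  case 0 then show ?case by simp
next
  case (Suc j)
  have "(app Kk ^^ Suc j) h x = app Kk ((app Kk ^^ j) h) x" by simp
  also have "\<dots> \<le> app Kk ((app P ^^ j) h) x"
    by (rule app_mono_fun[OF K_nonneg]) (use Suc in auto)
  also have "\<dots> \<le> app P ((app P ^^ j) h) x"
  proof -
    have nn: "0 \<le> (app P ^^ j) h y" for y by (rule app_pow_nonneg[OF P_nonneg assms])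
    show ?thesis by (rule app_mono_kernel[OF _ nn]) (use P_nonneg in \<open>auto simp: Kk_def\<close>)
  qed
  finally show ?case by simp
qed

lemma qq_split: "qq (j + m) z \<le> (\<Sum>y\<in>UNIV. mpow P j z y * qq m y)"
proof -
  have "qq (j + m) z = (app Kk ^^ j) (qq m) z" by (simp add: qq_def funpow_add)
  also have "\<dots> \<le> (app P ^^ j) (qq m) z" by (rule K_le_P_pow) (simp add: qq_bounds)
  finally show ?thesis by (simp add: app_pow_mpow)
qed

lemma SS_eq: "SS u z = (\<Sum>k. pw u k * qq k z)"
  by (simp add: SS_def heat_def qq_def)

lemma qq_abs: "\<bar>qq k z\<bar> \<le> 1" using qq_bounds[of k z] by simp

lemma SS_bounds: assumes "u \<ge> 0" shows "0 \<le> SS u z" "SS u z \<le> 1"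
proof -
  show "0 \<le> SS u z" unfolding SS_eq
    by (rule suminf_nonneg[OF pw_summable_bdd'[OF assms qq_abs]])
       (simp add: pw_nonneg[OF assms] qq_bounds)
  have "\<bar>\<Sum>k. pw u k * qq k z\<bar> \<le> 1" by (rule pw_suminf_bdd[OF assms qq_abs])
  then show "SS u z \<le> 1" unfolding SS_eq by simp
qed

lemma cont_SS: assumes u: "u \<ge> 0" shows "cont_hit_prob P A z u = 1 - SS u z"
proof -
  have "cont_hit_prob P A z u = (\<Sum>k. pw u k * (1 - qq k z))"
    using u by (simp add: cont_hit_prob_def hit_qq pw_def)
  also have "\<dots> = (\<Sum>k. pw u k - pw u k * qq k z)" by (simp add: right_diff_distrib)
  also have "\<dots> = (\<Sum>k. pw u k) - (\<Sum>k. pw u k * qq k z)"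
    by (rule suminf_diff[symmetric, OF pw_summable pw_summable_bdd'[OF u qq_abs]])
  finally show ?thesis by (simp add: pw_suminf SS_eq)
qed

lemma mpow_le1: "mpow P j z y \<le> 1"
proof -
  have "(app P ^^ j) (\<lambda>_. 1) = (\<lambda>_. 1)"
  proof (induction j)
    case 0 then show ?case by simp
  next
    case (Suc j) then show ?case using app_const[OF stoch, of 1] by simp
  qed
  then have "(app P ^^ j) (\<lambda>_. 1) z = 1" by simp
  then have "(\<Sum>y\<in>UNIV. mpow P j z y) = 1" by (simp add: app_pow_mpow)
  moreover have "mpow P j z y \<le> (\<Sum>y\<in>UNIV. mpow P j z y)"
    by (rule member_le_sum) (simp_all add: mpow_nonneg[OF stoch])
  ultimately show ?thesis by simp
qed

lemma heat_P_mpow: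
  assumes a: "a \<ge> 0"
  shows "heat P a h z = (\<Sum>y\<in>UNIV. (\<Sum>j. pw a j * mpow P j z y) * h y)"
proof -
  have s: "summable (\<lambda>j. pw a j * mpow P j z y * h y)" for y
  proof -
    have "summable (\<lambda>j. pw a j * mpow P j z y)"
      by (rule pw_summable_bdd'[OF a, of _ 1]) (simp add: mpow_le1 mpow_nonneg[OF stoch])
    then show ?thesis by (rule summable_mult2)
  qed
  have "heat P a h z = (\<Sum>j. \<Sum>y\<in>UNIV. pw a j * mpow P j z y * h y)"
    by (simp add: heat_def app_pow_mpow sum_distrib_left mult.assoc)
  also have "\<dots> = (\<Sum>y\<in>UNIV. \<Sum>j. pw a j * mpow P j z y * h y)"
    by (rule suminf_sum) (use s in auto)
  also have "\<dots> = (\<Sum>y\<in>UNIV. (\<Sum>j. pw a j * mpow P j z y) * h y)"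
    by (rule sum.cong[OF refl]) (rule suminf_mult2[symmetric], rule pw_summable_bdd'[OF a, of _ 1],
        simp add: mpow_le1 mpow_nonneg[OF stoch])
  finally show ?thesis .
qed

lemma markov:
  assumes a: "a \<ge> 0" and b: "b \<ge> 0"
  shows "SS (a + b) z \<le> heat P a (SS b) z"
proof -
  have mb: "\<bar>mpow P j z y\<bar> \<le> 1" for j y using mpow_le1 mpow_nonneg[OF stoch] by simp
  have "SS (a + b) z \<le> (\<Sum>y\<in>UNIV. (\<Sum>j. pw a j * mpow P j z y) * (\<Sum>m. pw b m * qq m y))"
    unfolding SS_eq
    by (rule poisson_split_le[where x="\<lambda>n. qq n z" and B=1 and Y=UNIV and c="\<lambda>y j. mpow P j z y"
          and C=1 and d="\<lambda>y m. qq m y" and D=1, OF a b])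
       (simp_all add: mb qq_abs qq_split)
  also have "\<dots> = heat P a (SS b) z"
    unfolding heat_P_mpow[OF a] SS_eq ..
  finally show ?thesis .
qed

lemma SS_mono:
  assumes v: "v \<ge> 0" and vu: "v \<le> u"
  shows "SS u z \<le> SS v z"
proof -
  have a: "u - v \<ge> 0" using vu by simp
  have "SS ((u - v) + v) z \<le> (\<Sum>y\<in>{z}. (\<Sum>j. pw (u - v) j * 1) * (\<Sum>m. pw v m * qq m y))"
    unfolding SS_eq
    by (rule poisson_split_le[where x="\<lambda>n. qq n z" and B=1 and Y="{z}" and c="\<lambda>y j. 1"
          and C=1 and d="\<lambda>y m. qq m y" and D=1, OF a v])
       (simp_all add: qq_abs qq_antimono)
  also have "\<dots> = SS v z" using pw_suminf by (simp add: SS_eq)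
  finally show ?thesis by simp
qed

lemma heat_P_shift:
  assumes a: "a \<ge> 0"
  shows "heat P a (\<lambda>x. h x + c) z = heat P a h z + c"
proof -
  obtain B where B: "\<forall>x. \<bar>h x\<bar> \<le> B" using finite_bound by blast
  have s: "summable (\<lambda>k. pw a k * (app P ^^ k) h z)"
    by (rule pw_summable_bdd'[OF a, of _ B]) (use substoch_pow_bound[OF substoch_P] B in blast)
  have "heat P a (\<lambda>x. h x + c) z = (\<Sum>k. pw a k * (app P ^^ k) h z + pw a k * c)"
    by (simp add: heat_def app_pow_add_const[OF stoch] distrib_left)
  also have "\<dots> = (\<Sum>k. pw a k * (app P ^^ k) h z) + (\<Sum>k. pw a k * c)"
    by (rule suminf_add[symmetric, OF s summable_mult2[OF pw_summable]])
  also have "(\<Sum>k. pw a k * c) = c" using suminf_mult2[OF pw_summable, of _ c] pw_suminf by simp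
  finally show ?thesis by (simp add: heat_def)
qed

end

context chainA begin

definition trel where "trel = t_rel P"
definition rr where "rr t = (t + \<bar>ln eps\<bar>) * trel"
definition ll where "ll = trel * ln 2"
definition ss where "ss = 2 / eps * trel * ln 2"
definition DD where "DD = ll + ss"
definition mm where "mm v = (\<Sum>x\<in>UNIV. \<pi> x * SS v x)"
definition Dl where "Dl t v = heat P (rr t) (\<lambda>x. SS v x - mm v)"

lemma trel_eq: "trel = 1 / gam" by (simp add: trel_def t_rel_def gam_def)
lemma trel_pos: "trel > 0" using gam_pos trel_eq by simp
lemma rr_nonneg: "t \<ge> 0 \<Longrightarrow> rr t \<ge> 0" using trel_pos by (simp add: rr_def)
lemma ll_pos: "ll > 0" using trel_pos by (simp add: ll_def)
lemma ss_pos: "ss > 0" using trel_pos eps_pos by (simp add: ss_def)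
lemma DD_pos: "DD > 0" using ll_pos ss_pos by (simp add: DD_def)

lemma VA_g0: "VA g0" by (simp add: VA_def g0_def)

lemma nrm_g0: "nrm \<pi> g0 \<le> 1"
proof -
  have "(nrm \<pi> g0)\<^sup>2 = 1 - eps" using nrm_sq[OF pos0, of g0] eps_compl
    by (simp add: ip_def power2_eq_square mult.assoc)
  then have "(nrm \<pi> g0)\<^sup>2 \<le> 1\<^sup>2" using eps_pos by simp
  then show ?thesis using nrm_nonneg[of \<pi> g0] by (metis power2_le_imp_le zero_le_one)
qed

lemma nrm_SS: assumes v: "v \<ge> 0" shows "nrm \<pi> (SS v) \<le> exp (- v * gam * eps)"
proof -
  have "nrm \<pi> (SS v) \<le> exp (- v * gam * eps) * nrm \<pi> g0"
    unfolding SS_def by (rule heat_K_contract[OF VA_g0 v])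
  also have "\<dots> \<le> exp (- v * gam * eps) * 1" by (rule mult_left_mono[OF nrm_g0]) simp
  finally show ?thesis by simp
qed

lemma nrm_one: "nrm \<pi> (\<lambda>_. 1) = 1"
proof -
  have "(nrm \<pi> (\<lambda>_. 1))\<^sup>2 = 1" using nrm_sq[OF pos0, of "\<lambda>_. 1"] sum1 by (simp add: ip_def)
  then show ?thesis using nrm_nonneg[of \<pi> "\<lambda>_. 1"] by (simp add: power2_eq_1_iff)
qed

lemma mm_le: "mm v \<le> nrm \<pi> (SS v)"
proof -
  have "mm v = ip \<pi> (SS v) (\<lambda>_. 1)" by (simp add: mm_def ip_def)
  also have "\<dots> \<le> nrm \<pi> (SS v) * nrm \<pi> (\<lambda>_. 1)" using ip_cs[OF pos0, of "SS v" "\<lambda>_. 1"] by simp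
  finally show ?thesis by (simp add: nrm_one)
qed

lemma mm_nonneg: "v \<ge> 0 \<Longrightarrow> mm v \<ge> 0"
  unfolding mm_def by (intro sum_nonneg mult_nonneg_nonneg) (simp_all add: SS_bounds)

lemma nrm_centered: "nrm \<pi> (\<lambda>x. SS v x - mm v) \<le> nrm \<pi> (SS v)"
proof -
  have "(nrm \<pi> (\<lambda>x. SS v x - mm v))\<^sup>2 = ip \<pi> (SS v) (SS v) - (mm v)\<^sup>2"
    unfolding nrm_sq[OF pos0] ip_shift sum1 mm_def[symmetric] by (simp add: power2_eq_square)
  also have "\<dots> \<le> (nrm \<pi> (SS v))\<^sup>2" using nrm_sq[OF pos0, of "SS v"] by simp
  finally show ?thesis using nrm_nonneg by (metis power2_le_imp_le)
qed

lemma V0_centered: "V0 (\<lambda>x. SS v x - mm v)"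
  unfolding V0_def using sum1 by (simp add: right_diff_distrib sum_subtractf mm_def sum_distrib_right[symmetric])

lemma exp_rr: assumes "t \<ge> 0" shows "exp (- rr t * gam) \<le> exp (- t)"
proof -
  have "rr t * gam = t + \<bar>ln eps\<bar>" using gam_pos by (simp add: rr_def trel_eq)
  then show ?thesis by simp
qed

lemma nrm_Dl: assumes t: "t \<ge> 0" and v: "v \<ge> 0"
  shows "nrm \<pi> (Dl t v) \<le> exp (- t) * exp (- v * gam * eps)"
proof -
  have "nrm \<pi> (Dl t v) \<le> exp (- rr t * gam) * nrm \<pi> (\<lambda>x. SS v x - mm v)"
    unfolding Dl_def by (rule heat_P_contract[OF V0_centered rr_nonneg[OF t]])
  also have "\<dots> \<le> exp (- t) * exp (- v * gam * eps)"
    by (rule mult_mono[OF exp_rr[OF t] order_trans[OF nrm_centered nrm_SS[OF v]]]) (simp_all add: nrm_nonneg)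
  finally show ?thesis .
qed

lemma SS_split: assumes t: "t \<ge> 0" and v: "v \<ge> 0"
  shows "SS (rr t + v) z \<le> mm v + Dl t v z"
proof -
  have "SS (rr t + v) z \<le> heat P (rr t) (SS v) z" by (rule markov[OF rr_nonneg[OF t] v])
  also have "heat P (rr t) (SS v) = heat P (rr t) (\<lambda>x. (SS v x - mm v) + mm v)" by simp
  also have "\<dots> z = Dl t v z + mm v" unfolding Dl_def by (rule heat_P_shift[OF rr_nonneg[OF t]])
  finally show ?thesis by simp
qed

lemma decay: "exp (- (real i * DD) * gam * eps) \<le> (1/4) ^ i"
proof -
  have "gam * eps * ss = 2 * ln 2" using gam_pos eps_pos by (simp add: ss_def trel_eq)
  have "real i * DD * gam * eps \<ge> real i * ss * gam * eps"
    using ll_pos gam_pos eps_pos by (intro mult_right_mono mult_left_mono) (auto simp: DD_def)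
  also have "real i * ss * gam * eps = real i * (2 * ln 2)"
    using \<open>gam * eps * ss = 2 * ln 2\<close> by (simp add: mult_ac)
  finally have "exp (- (real i * DD) * gam * eps) \<le> exp (- (real i * (2 * ln 2)))" by simp
  also have "\<dots> = exp (- (2 * ln 2)) ^ i" using exp_of_nat_mult[of i "- (2 * ln 2)"] by simp
  also have "exp (- (2 * ln (2::real))) = 1 / 4"
  proof -
    have "exp (2 * ln (2::real)) = (exp (ln 2)) ^ 2" using exp_of_nat_mult[of 2 "ln (2::real)"] by simp
    then have "exp (2 * ln (2::real)) = 4" by simp
    then show ?thesis by (simp add: exp_minus)
  qed
  finally show ?thesis .
qed

end

context chainA begin

definition dd where "dd t i = Dl t (real i * DD)"
definition Phi where "Phi t z = (\<Sum>n. 4 ^ (n + 1) * (dd t (n + 1) z)\<^sup>2)"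
definition JJ where "JJ t = {z. Phi t z \<le> 1}"

lemma nrm_dd: assumes t: "t \<ge> 0" shows "nrm \<pi> (dd t i) \<le> exp (- t) * (1/4) ^ i"
proof -
  have v: "real i * DD \<ge> 0" using DD_pos by simp
  have "nrm \<pi> (dd t i) \<le> exp (- t) * exp (- (real i * DD) * gam * eps)"
    unfolding dd_def by (rule nrm_Dl[OF t v])
  also have "\<dots> \<le> exp (- t) * (1/4) ^ i" by (rule mult_left_mono[OF decay]) simp
  finally show ?thesis .
qed

lemma nrm_dd_sq: assumes t: "t \<ge> 0" shows "(nrm \<pi> (dd t i))\<^sup>2 \<le> exp (- 2 * t) * (1/16) ^ i"
proof -
  have "(nrm \<pi> (dd t i))\<^sup>2 \<le> (exp (- t) * (1/4) ^ i)\<^sup>2"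
    using nrm_dd[OF t, of i] nrm_nonneg by (intro power_mono) auto
  also have "\<dots> = (exp (- t) * exp (- t)) * ((1/4) ^ i * (1/4) ^ i)"
    by (simp add: power2_eq_square mult_ac)
  also have "exp (- t) * exp (- t) = exp (- 2 * t)" by (simp add: mult_exp_exp)
  also have "(1/4::real) ^ i * (1/4) ^ i = (1/16) ^ i" by (simp add: power_mult_distrib[symmetric])
  finally show ?thesis .
qed

lemma term_bd: assumes t: "t \<ge> 0"
  shows "4 ^ k * (dd t k z)\<^sup>2 \<le> exp (- 2 * t) / \<pi> z * (1/4) ^ k"
proof -
  have "\<pi> z * (dd t k z)\<^sup>2 \<le> exp (- 2 * t) * (1/16) ^ k"
    using pointwise_le_nrm[OF pos0, of z "dd t k"] nrm_dd_sq[OF t, of k] by linarith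
  then have "(dd t k z)\<^sup>2 \<le> exp (- 2 * t) * (1/16) ^ k / \<pi> z"
    by (simp add: field_simps mult.commute)
  then have "4 ^ k * (dd t k z)\<^sup>2 \<le> 4 ^ k * (exp (- 2 * t) * (1/16) ^ k / \<pi> z)"
    by (rule mult_left_mono) simp
  also have "\<dots> = exp (- 2 * t) / \<pi> z * (4 ^ k * (1/16) ^ k)" by simp
  also have "4 ^ k * (1/16) ^ k = ((1/4) ^ k :: real)" by (simp add: power_mult_distrib[symmetric])
  finally show ?thesis .
qed

lemma geo4: "(\<lambda>n. (1/4::real) ^ (n + 1)) sums (1/3)"
proof -
  have "(\<lambda>n. (1/4::real) ^ n) sums (1 / (1 - 1/4))" by (rule geometric_sums) simp
  then have "(\<lambda>n. 1/4 * (1/4::real) ^ n) sums (1/4 * (1 / (1 - 1/4)))" by (rule sums_mult)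
  then show ?thesis by simp
qed

lemma Phi_summable: assumes t: "t \<ge> 0"
  shows "summable (\<lambda>n. 4 ^ (n + 1) * (dd t (n + 1) z)\<^sup>2)"
proof (rule summable_comparison_test[of _ "\<lambda>n. exp (- 2 * t) / \<pi> z * (1/4) ^ (n + 1)"])
  show "\<exists>N. \<forall>n\<ge>N. norm (4 ^ (n + 1) * (dd t (n + 1) z)\<^sup>2) \<le> exp (- 2 * t) / \<pi> z * (1/4) ^ (n + 1)"
  proof (intro exI allI impI)
    fix n :: nat
    have nn: "0 \<le> 4 ^ (n + 1) * (dd t (n + 1) z)\<^sup>2" by simp
    show "norm (4 ^ (n + 1) * (dd t (n + 1) z)\<^sup>2) \<le> exp (- 2 * t) / \<pi> z * (1/4) ^ (n + 1)"
      by (subst real_norm_def, subst abs_of_nonneg[OF nn], rule term_bd[OF t])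
  qed
  show "summable (\<lambda>n. exp (- 2 * t) / \<pi> z * (1/4::real) ^ (n + 1))"
    using geo4 sums_summable summable_mult by blast
qed

lemma Phi_nonneg: "Phi t z \<ge> 0" if "t \<ge> 0"
  unfolding Phi_def by (rule suminf_nonneg[OF Phi_summable[OF that]]) simp

lemma sum_Phi: assumes t: "t \<ge> 0"
  shows "(\<Sum>z\<in>UNIV. \<pi> z * Phi t z) \<le> exp (- 2 * t) / 3"
proof -
  have "(\<Sum>z\<in>UNIV. \<pi> z * Phi t z) = (\<Sum>z\<in>UNIV. \<Sum>n. \<pi> z * (4 ^ (n + 1) * (dd t (n + 1) z)\<^sup>2))"
    unfolding Phi_def by (rule sum.cong[OF refl]) (rule suminf_mult[symmetric, OF Phi_summable[OF t]])
  also have "\<dots> = (\<Sum>n. \<Sum>z\<in>UNIV. \<pi> z * (4 ^ (n + 1) * (dd t (n + 1) z)\<^sup>2))"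
    by (rule suminf_sum[symmetric]) (rule summable_mult[OF Phi_summable[OF t]])
  also have "\<dots> = (\<Sum>n. 4 ^ (n + 1) * (nrm \<pi> (dd t (n + 1)))\<^sup>2)"
  proof -
    have "(\<Sum>z\<in>UNIV. \<pi> z * (4 ^ (n + 1) * (dd t (n + 1) z)\<^sup>2)) = 4 ^ (n + 1) * (nrm \<pi> (dd t (n + 1)))\<^sup>2" for n
      unfolding nrm_sq[OF pos0] ip_def by (simp add: sum_distrib_left power2_eq_square mult_ac)
    then show ?thesis by simp
  qed
  also have "\<dots> \<le> (\<Sum>n. exp (- 2 * t) * (1/4) ^ (n + 1))"
  proof (rule suminf_le)
    show "4 ^ (n + 1) * (nrm \<pi> (dd t (n + 1)))\<^sup>2 \<le> exp (- 2 * t) * (1/4) ^ (n + 1)" for n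
    proof -
      have "4 ^ (n + 1) * (nrm \<pi> (dd t (n + 1)))\<^sup>2 \<le> 4 ^ (n + 1) * (exp (- 2 * t) * (1/16) ^ (n + 1))"
        by (rule mult_left_mono[OF nrm_dd_sq[OF t]]) simp
      also have "\<dots> = exp (- 2 * t) * (4 ^ (n + 1) * (1/16) ^ (n + 1))" by simp
      also have "(4 ^ (n + 1) * (1/16) ^ (n + 1)) = ((1/4) ^ (n + 1) :: real)"
        by (simp add: power_mult_distrib[symmetric])
      finally show ?thesis .
    qed
    have "(\<lambda>n. exp (- 2 * t) * (1/4::real) ^ (n + 1)) sums (exp (- 2 * t) * (1/3))"
      by (rule sums_mult[OF geo4])
    then show "summable (\<lambda>n. exp (- 2 * t) * (1/4::real) ^ (n + 1))" by (rule sums_summable)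
    show "summable (\<lambda>n. 4 ^ (n + 1) * (nrm \<pi> (dd t (n + 1)))\<^sup>2)"
    proof -
      have "summable (\<lambda>n. \<Sum>z\<in>UNIV. \<pi> z * (4 ^ (n + 1) * (dd t (n + 1) z)\<^sup>2))"
        by (rule summable_sum) (rule summable_mult[OF Phi_summable[OF t]])
      moreover have "(\<Sum>z\<in>UNIV. \<pi> z * (4 ^ (n + 1) * (dd t (n + 1) z)\<^sup>2)) = 4 ^ (n + 1) * (nrm \<pi> (dd t (n + 1)))\<^sup>2" for n
        unfolding nrm_sq[OF pos0] ip_def by (simp add: sum_distrib_left power2_eq_square mult_ac)
      ultimately show ?thesis by simp
    qed
  qed
  also have "\<dots> = exp (- 2 * t) * (1/3)"
    using sums_mult[OF geo4, of "exp (- 2 * t)"] sums_unique by metis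
  finally show ?thesis by simp
qed

lemma mass_J: assumes t: "t \<ge> 0"
  shows "(\<Sum>z\<in>JJ t. \<pi> z) \<ge> 1 - exp (- 2 * t) / 3"
proof -
  have "(\<Sum>z\<in>- JJ t. \<pi> z) \<le> (\<Sum>z\<in>- JJ t. \<pi> z * Phi t z)"
    by (intro sum_mono) (auto simp: JJ_def not_le less_imp_le)
  also have "\<dots> \<le> (\<Sum>z\<in>UNIV. \<pi> z * Phi t z)"
    by (rule sum_mono2) (auto intro!: mult_nonneg_nonneg Phi_nonneg[OF t])
  also have "\<dots> \<le> exp (- 2 * t) / 3" by (rule sum_Phi[OF t])
  finally have c: "(\<Sum>z\<in>- JJ t. \<pi> z) \<le> exp (- 2 * t) / 3" .
  have "(\<Sum>z\<in>JJ t. \<pi> z) + (\<Sum>z\<in>- JJ t. \<pi> z) = 1"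
    using sum.union_disjoint[of "JJ t" "- JJ t" \<pi>] sum1 by (simp add: Un_commute)
  then show ?thesis using c by linarith
qed

lemma J_dd: assumes t: "t \<ge> 0" and z: "z \<in> JJ t" and k: "k \<ge> 1"
  shows "\<bar>dd t k z\<bar> \<le> (1/2) ^ k"
proof -
  obtain n where n: "k = n + 1" using k by (metis add.commute le_Suc_ex)
  have "4 ^ (n + 1) * (dd t (n + 1) z)\<^sup>2 = (\<Sum>j\<in>{n}. 4 ^ (j + 1) * (dd t (j + 1) z)\<^sup>2)" by simp
  also have "\<dots> \<le> Phi t z" unfolding Phi_def
    by (rule sum_le_suminf[OF Phi_summable[OF t]]) auto
  also have "\<dots> \<le> 1" using z by (simp add: JJ_def)
  finally have "4 ^ k * (dd t k z)\<^sup>2 \<le> 1" using n by simp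
  then have "(dd t k z)\<^sup>2 \<le> (1/4) ^ k" by (simp add: field_simps power_divide)
  also have "(1/4::real) ^ k = ((1/2) ^ k)\<^sup>2" by (simp add: power_mult_distrib[symmetric] power2_eq_square)
  finally show ?thesis by (metis abs_le_square_iff abs_of_nonneg zero_le_divide_1_iff zero_le_numeral zero_le_power zero_le_one)
qed

lemma hit_bound: assumes t: "t \<ge> 0" and z: "z \<in> JJ t" and k: "k \<ge> 1"
  shows "SS (rr t + real k * DD) z \<le> (1/4) ^ k + (1/2) ^ k"
proof -
  have v: "real k * DD \<ge> 0" using DD_pos by simp
  have "SS (rr t + real k * DD) z \<le> mm (real k * DD) + dd t k z"
    unfolding dd_def by (rule SS_split[OF t v])
  also have "mm (real k * DD) \<le> (1/4) ^ k"
    using mm_le[of "real k * DD"] nrm_SS[OF v] decay[of k] by linarith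
  finally show ?thesis using J_dd[OF t z k] by linarith
qed

end

context chainA begin

lemma tail_bound:
  assumes t: "t \<ge> 0" and z: "z \<in> JJ t" and u: "u \<ge> rr t + real (k + 1) * DD"
  shows "SS u z \<le> (1/2) ^ k"
proof -
  have v: "rr t + real (k + 1) * DD \<ge> 0" using rr_nonneg[OF t] DD_pos by simp
  have "SS u z \<le> SS (rr t + real (k + 1) * DD) z" by (rule SS_mono[OF v u])
  also have "\<dots> \<le> (1/4) ^ (k + 1) + (1/2) ^ (k + 1)" by (rule hit_bound[OF t z]) simp
  also have "(1/4::real) ^ (k + 1) \<le> (1/2) ^ (k + 1)" by (rule power_mono) auto
  then have "(1/4::real) ^ (k + 1) + (1/2) ^ (k + 1) \<le> (1/2) ^ k" by simp
  finally show ?thesis by simp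
qed

definition Bf where
  "Bf t u = indicator {0..<rr t + DD} u +
     (\<Sum>k. ennreal ((1/2) ^ k) * indicator {rr t + real (k + 1) * DD ..< rr t + real (k + 2) * DD} u)"

lemma pointwise_Bf:
  assumes t: "t \<ge> 0" and z: "z \<in> JJ t"
  shows "indicator {0..} u * ennreal (1 - cont_hit_prob P A z u) \<le> Bf t u"
proof (cases "u < 0")
  case True then show ?thesis by simp
next
  case False
  then have u0: "u \<ge> 0" by simp
  have lhs: "indicator {0..} u * ennreal (1 - cont_hit_prob P A z u) = ennreal (SS u z)"
    using u0 cont_SS[OF u0, of z] by simp
  show ?thesis
  proof (cases "u < rr t + DD")
    case True
    have "ennreal (SS u z) \<le> ennreal 1" using SS_bounds[OF u0] by (simp add: ennreal_leI)
    also have "\<dots> = indicator {0..<rr t + DD} u" using True u0 by simp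
    also have "\<dots> \<le> Bf t u" unfolding Bf_def by simp
    finally show ?thesis using lhs by simp
  next
    case False
    define m where "m = nat \<lfloor>(u - rr t) / DD\<rfloor>"
    have q1: "(u - rr t) / DD \<ge> 1" using False DD_pos by (simp add: field_simps)
    then have fl: "\<lfloor>(u - rr t) / DD\<rfloor> \<ge> 1" by (simp add: le_floor_iff)
    have im: "int m = \<lfloor>(u - rr t) / DD\<rfloor>" unfolding m_def using fl by simp
    have m1: "m \<ge> 1" using im fl by linarith
    have rm: "real m = real_of_int \<lfloor>(u - rr t) / DD\<rfloor>" using im by (metis of_int_of_nat_eq)
    have mle: "real m \<le> (u - rr t) / DD" unfolding rm by (rule of_int_floor_le)
    have mgt: "(u - rr t) / DD < real m + 1" unfolding rm by (rule real_of_int_floor_add_one_gt)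
    define k where "k = m - 1"
    have km: "real (k + 1) = real m" "real (k + 2) = real m + 1" using m1 by (simp_all add: k_def)
    have lo: "rr t + real (k + 1) * DD \<le> u" using mle DD_pos km by (simp add: field_simps)
    have hi: "u < rr t + real (k + 2) * DD" using mgt DD_pos km by (simp add: field_simps)
    have "ennreal (SS u z) \<le> ennreal ((1/2) ^ k)" by (rule ennreal_leI[OF tail_bound[OF t z lo]])
    also have "\<dots> = ennreal ((1/2) ^ k) * indicator {rr t + real (k + 1) * DD ..< rr t + real (k + 2) * DD} u"
      using lo hi by simp
    also have "\<dots> \<le> (\<Sum>j. ennreal ((1/2) ^ j) * indicator {rr t + real (j + 1) * DD ..< rr t + real (j + 2) * DD} u)"
    proof -
      define F where "F j = ennreal ((1/2) ^ j) * (indicator {rr t + real (j + 1) * DD ..< rr t + real (j + 2) * DD} u :: ennreal)" for j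
      have "F k = sum F {k}" by simp
      also have "\<dots> \<le> suminf F" by (rule sum_le_suminf) (auto intro: summableI)
      finally show ?thesis by (simp only: F_def[abs_def])
    qed
    also have "\<dots> \<le> Bf t u" unfolding Bf_def by simp
    finally show ?thesis using lhs by simp
  qed
qed

lemma integral_Bf:
  assumes t: "t \<ge> 0"
  shows "(\<integral>\<^sup>+ u. Bf t u \<partial>lborel) = ennreal (rr t + 3 * DD)"
proof -
  have R: "rr t + DD \<ge> 0" using rr_nonneg[OF t] DD_pos by simp
  have int1: "(\<integral>\<^sup>+ u. indicator {0..<rr t + DD} u \<partial>lborel) = ennreal (rr t + DD)"
    using R by simp
  define F where "F k u = ennreal ((1/2) ^ k) * (indicator {rr t + real (k + 1) * DD ..< rr t + real (k + 2) * DD} u :: ennreal)" for k u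
  have intk: "(\<integral>\<^sup>+ u. F k u \<partial>lborel) = ennreal ((1/2) ^ k * DD)" for k
  proof -
    have le: "rr t + real (k + 1) * DD \<le> rr t + real (k + 2) * DD" using DD_pos by simp
    have "(\<integral>\<^sup>+ u. F k u \<partial>lborel)
        = ennreal ((1/2) ^ k) * emeasure lborel {rr t + real (k + 1) * DD ..< rr t + real (k + 2) * DD}"
      unfolding F_def by (rule nn_integral_cmult_indicator) simp
    also have "\<dots> = ennreal ((1/2) ^ k) * ennreal DD"
      using emeasure_lborel_Ico[OF le] by (simp add: algebra_simps)
    also have "\<dots> = ennreal ((1/2) ^ k * DD)" using DD_pos by (simp add: ennreal_mult)
    finally show ?thesis .
  qed
  have sums: "(\<lambda>k. (1/2::real) ^ k * DD) sums (2 * DD)"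
  proof -
    have "(\<lambda>k. (1/2::real) ^ k) sums (1 / (1 - 1/2))" by (rule geometric_sums) simp
    then show ?thesis using sums_mult2[of "\<lambda>k. (1/2::real) ^ k" 2 DD] by simp
  qed
  have Fm: "F k \<in> borel_measurable lborel" for k unfolding F_def by measurable
  have Bf': "Bf t = (\<lambda>u. indicator {0..<rr t + DD} u + (\<Sum>k. F k u))"
    by (simp add: Bf_def F_def fun_eq_iff)
  have "(\<integral>\<^sup>+ u. Bf t u \<partial>lborel) = (\<integral>\<^sup>+ u. indicator {0..<rr t + DD} u \<partial>lborel) +
      (\<integral>\<^sup>+ u. (\<Sum>k. F k u) \<partial>lborel)"
    unfolding Bf' by (rule nn_integral_add) (use Fm in measurable)
  also have "(\<integral>\<^sup>+ u. (\<Sum>k. F k u) \<partial>lborel) = (\<Sum>k. (\<integral>\<^sup>+ u. F k u \<partial>lborel))"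
    by (rule nn_integral_suminf[OF Fm])
  also have "\<dots> = (\<Sum>k. ennreal ((1/2) ^ k * DD))"
    by (simp only: intk)
  also have "\<dots> = ennreal (2 * DD)"
    by (rule suminf_ennreal_eq[OF _ sums]) (use DD_pos in simp)
  finally show ?thesis using int1 R DD_pos by (simp add: ennreal_plus[symmetric] del: ennreal_plus)
qed

lemma E_bound:
  assumes t: "t \<ge> 0" and z: "z \<in> JJ t"
  shows "exp_hit_time P A z \<le> ennreal (rr t + 3 * DD)"
proof -
  have "exp_hit_time P A z \<le> (\<integral>\<^sup>+ u. Bf t u \<partial>lborel)"
    unfolding exp_hit_time_def by (rule nn_integral_mono) (rule pointwise_Bf[OF t z])
  then show ?thesis using integral_Bf[OF t] by simp
qed

end

lemma final_ineq:
  fixes x :: real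
  assumes "0 \<le> x" "x \<le> 1/2"
  shows "(1 - x)\<^sup>2 \<le> 1 - x\<^sup>2 - x"
proof -
  have "x * (2 * x - 1) \<le> 0" using assms by (intro mult_nonneg_nonpos) auto
  then show ?thesis by (simp add: power2_eq_square algebra_simps)
qed

theorem lemma4p6:
  fixes P :: "'a::finite \<Rightarrow> 'a \<Rightarrow> real" and \<pi> :: "'a \<Rightarrow> real"
    and A :: "'a set" and t :: real
  assumes "stochastic P" and "irreducible_chain P"
    and "\<forall>x. \<pi> x > 0" and "(\<Sum>x\<in>UNIV. \<pi> x) = 1" and "reversible P \<pi>"
    and "CARD('a) \<ge> 2"
    and "A \<noteq> {}" and "t \<ge> 1"
  shows "let \<epsilon> = (\<Sum>x\<in>A. \<pi> x);
             r = (t + \<bar>ln \<epsilon>\<bar>) * t_rel P;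
             l = t_rel P * ln 2;
             s = 2 / \<epsilon> * t_rel P * ln 2
         in \<exists>J :: 'a set.
              (\<Sum>x\<in>J. \<pi> x) \<ge> 1 - 3/4 * exp (- 2 * t)
            \<and> (\<forall>z\<in>J. exp_hit_time P A z \<le> ennreal (r + 11/2 * (s + l)))
            \<and> (\<forall>z\<in>J. \<forall>i::nat. i \<ge> 1 \<longrightarrow>
                  cont_hit_prob P A z (r + real i * (l + s)) \<ge> (1 - 1 / 2 ^ i)\<^sup>2)"
proof -
  interpret chainA P \<pi> A
    by unfold_locales (use assms in auto)
  have t0: "t \<ge> 0" using assms(8) by simp
  have r_eq: "(t + \<bar>ln (\<Sum>x\<in>A. \<pi> x)\<bar>) * t_rel P = rr t" by (simp add: rr_def trel_def eps_def)
  have s_eq: "2 / (\<Sum>x\<in>A. \<pi> x) * t_rel P * ln 2 = ss" by (simp add: ss_def trel_def eps_def)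
  have l_eq: "t_rel P * ln 2 = ll" by (simp add: ll_def trel_def)
  have part1: "(\<Sum>x\<in>JJ t. \<pi> x) \<ge> 1 - 3/4 * exp (- 2 * t)"
    using mass_J[OF t0] exp_gt_zero[of "- 2 * t"] by linarith
  have part2: "exp_hit_time P A z \<le> ennreal (rr t + 11/2 * (ss + ll))" if z: "z \<in> JJ t" for z
  proof -
    have "exp_hit_time P A z \<le> ennreal (rr t + 3 * DD)" by (rule E_bound[OF t0 z])
    also have "\<dots> \<le> ennreal (rr t + 11/2 * (ss + ll))"
      using DD_pos by (intro ennreal_leI) (simp add: DD_def)
    finally show ?thesis .
  qed
  have part3: "cont_hit_prob P A z (rr t + real i * (ll + ss)) \<ge> (1 - 1 / 2 ^ i)\<^sup>2"
    if z: "z \<in> JJ t" and i: "i \<ge> 1" for z i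
  proof -
    have tm: "rr t + real i * (ll + ss) \<ge> 0" using rr_nonneg[OF t0] ll_pos ss_pos by simp
    have "cont_hit_prob P A z (rr t + real i * (ll + ss)) = 1 - SS (rr t + real i * DD) z"
      using cont_SS[OF tm] by (simp add: DD_def)
    moreover have "SS (rr t + real i * DD) z \<le> (1/4) ^ i + (1/2) ^ i" by (rule hit_bound[OF t0 z i])
    moreover have "(1 - 1 / 2 ^ i)\<^sup>2 \<le> 1 - ((1/2) ^ i)\<^sup>2 - (1/2::real) ^ i"
    proof -
      have "(1/2::real) ^ i \<le> (1/2) ^ 1" using i by (intro power_decreasing) auto
      then have "(1 - (1/2) ^ i)\<^sup>2 \<le> 1 - ((1/2) ^ i)\<^sup>2 - (1/2::real) ^ i" by (intro final_ineq) auto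
      then show ?thesis by (simp add: power_divide)
    qed
    moreover have "((1/2::real) ^ i)\<^sup>2 = (1/4) ^ i" by (simp add: power2_eq_square power_mult_distrib[symmetric])
    ultimately show ?thesis by linarith
  qed
  show ?thesis
    unfolding Let_def r_eq s_eq l_eq
    using part1 part2 part3 by blast
qed

end
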